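(* Let $P$ be the uniform probability measure on $[0,1]$, $Q$ a probability measure on $[0,1]$ with unimodal density $r = dQ/dP$, maximiser $x^*$ and $r_{max}=\sup r<\infty$. Let $B_1,\dots,B_N$ be the first $N$ bounds produced by AS*, $G_N$ the $N$-th Gumbel produced by AS*, and $E_N = e^{-G_N}$. Then $$\mathbb{E}[E_N \mid B_{1:N}] = \sum_{n=1}^N \frac{1}{P(B_n)}.$$
   Context: Unimodal: $r$ non-decreasing on $[0,x^*]$, non-increasing on $[x^*,1]$, $r(x^* ) = r_{max}$. $\mathrm{TG}(\mu,\kappa)$ is the unit-scale Gumbel with location $\mu$ truncated to $(-\infty,\kappa]$ (density $\propto \exp(-(g-\mu)-e^{-(g-\mu)})$ on $g\le\kappa$). AS*: $B_1=[0,1]$, $G_0=+\infty$; for every $n\ge1$ draw $G_n\sim\mathrm{TG}(\log P(B_n),G_{n-1})$ (conditionally on the past) and independently $X_n\sim P(\cdot\cap B_n)/P(B_n)$; set $L_n=\max_{k\le n}(\log r(X_k)+G_k)$, $U_n=\log r_{max}+G_n$, and $B_{n+1}=[\max(\{0\}\cup\{X_k:k\le n,X_k\le x^*\}),\ \min(\{1\}\cup\{X_k:k\le n,X_k\ge x^*\})]$. These sequences are defined for all $n$; the algorithm's number of steps is $T=\min\{n\ge1: L_n\ge U_n\}$. *)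

theory Defs
  imports "HOL-Probability.Probability"
begin

definition P_unif :: "real measure" where
  "P_unif = uniform_measure lborel {0..1}"

definition gumbel_density :: "real \<Rightarrow> real \<Rightarrow> real" where
  "gumbel_density \<mu> g = exp (- (g - \<mu>) - exp (- (g - \<mu>)))"

definition TG :: "real \<Rightarrow> ereal \<Rightarrow> real measure" where
  "TG \<mu> \<kappa> = density lborel (\<lambda>g. ennreal (gumbel_density \<mu> g) * indicator {t. ereal t \<le> \<kappa>} g
        / (\<integral>\<^sup>+ t. ennreal (gumbel_density \<mu> t) * indicator {t. ereal t \<le> \<kappa>} t \<partial>lborel))"

definition AS_lo :: "(nat \<Rightarrow> 'a \<Rightarrow> real) \<Rightarrow> real \<Rightarrow> nat \<Rightarrow> 'a \<Rightarrow> real" where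
  "AS_lo X xs n \<omega> = Max ({0} \<union> {X k \<omega> | k. 1 \<le> k \<and> k < n \<and> X k \<omega> \<le> xs})"

definition AS_hi :: "(nat \<Rightarrow> 'a \<Rightarrow> real) \<Rightarrow> real \<Rightarrow> nat \<Rightarrow> 'a \<Rightarrow> real" where
  "AS_hi X xs n \<omega> = Min ({1} \<union> {X k \<omega> | k. 1 \<le> k \<and> k < n \<and> X k \<omega> \<ge> xs})"

definition AS_B :: "(nat \<Rightarrow> 'a \<Rightarrow> real) \<Rightarrow> real \<Rightarrow> nat \<Rightarrow> 'a \<Rightarrow> real set" where
  "AS_B X xs n \<omega> = {AS_lo X xs n \<omega> .. AS_hi X xs n \<omega>}"

text \<open>Truncation level for G_n: G_0 = +infinity.\<close>
definition AS_prevG :: "(nat \<Rightarrow> 'a \<Rightarrow> real) \<Rightarrow> nat \<Rightarrow> 'a \<Rightarrow> ereal" where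
  "AS_prevG G n \<omega> = (if n \<le> 1 then \<infinity> else ereal (G (n - 1) \<omega>))"

definition gen_sigma :: "'a measure \<Rightarrow> ('a \<Rightarrow> real) set \<Rightarrow> 'a measure" where
  "gen_sigma M fs = sigma (space M) (\<Union>f\<in>fs. {f -` A \<inter> space M | A. A \<in> sets borel})"

definition AS_past :: "'a measure \<Rightarrow> (nat \<Rightarrow> 'a \<Rightarrow> real) \<Rightarrow> (nat \<Rightarrow> 'a \<Rightarrow> real) \<Rightarrow> nat \<Rightarrow> 'a measure" where
  "AS_past M G X n = gen_sigma M ({G k | k. 1 \<le> k \<and> k < n} \<union> {X k | k. 1 \<le> k \<and> k < n})"

text \<open>The process (G_n, X_n)_{n>=1} on M follows AS*: conditionally on the past,
  G_n ~ TG(log P(B_n), G_(n-1)) and independently X_n ~ P(. inter B_n)/P(B_n).\<close>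
definition is_AS_star :: "'a measure \<Rightarrow> real \<Rightarrow> (nat \<Rightarrow> 'a \<Rightarrow> real) \<Rightarrow> (nat \<Rightarrow> 'a \<Rightarrow> real) \<Rightarrow> bool" where
  "is_AS_star M xs G X \<longleftrightarrow>
     (\<forall>n\<ge>1. G n \<in> borel_measurable M \<and> X n \<in> borel_measurable M) \<and>
     (\<forall>n\<ge>1. \<forall>h \<in> borel_measurable (borel :: (real \<times> real) measure).
        AE \<omega> in M. nn_cond_exp M (AS_past M G X n) (\<lambda>\<omega>'. h (G n \<omega>', X n \<omega>')) \<omega>
          = (\<integral>\<^sup>+ z. h z \<partial>(TG (ln (measure P_unif (AS_B X xs n \<omega>))) (AS_prevG G n \<omega>)
                         \<Otimes>\<^sub>M uniform_measure P_unif (AS_B X xs n \<omega>))))"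

end

theory Submission
  imports Defs
begin

lemma lim_shift_top: "filterlim (\<lambda>x::real. x + c) at_top at_top"
proof -
  have "filterlim (\<lambda>x::real. c + x) at_top at_top"
    by (rule filterlim_tendsto_add_at_top[OF tendsto_const filterlim_ident])
  then show ?thesis by (simp add: add.commute)
qed

lemma lim_shift_bot: "filterlim (\<lambda>x::real. c - x) at_bot at_top"
proof -
  have "filterlim (\<lambda>x::real. - (x + (- c))) at_bot at_top"
    using lim_shift_top[of "- c"] by (simp add: filterlim_uminus_at_top)
  then show ?thesis by simp
qed

lemma lim_exp_shift_top: "filterlim (\<lambda>x::real. exp (x + c)) at_top at_top"
  using filterlim_compose[OF exp_at_top lim_shift_top] .

lemma lim_exp_shift_bot: "((\<lambda>x::real. exp (c - x)) \<longlongrightarrow> 0) at_top"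
  using filterlim_compose[OF exp_at_bot lim_shift_bot] .

lemma lim_A: "((\<lambda>x::real. - exp (- exp (x + \<mu>))) \<longlongrightarrow> 0) at_top"
proof -
  have "filterlim (\<lambda>x::real. - exp (x + \<mu>)) at_bot at_top"
    using lim_exp_shift_top[of \<mu>] by (simp add: filterlim_uminus_at_top)
  then have "((\<lambda>x::real. exp (- exp (x + \<mu>))) \<longlongrightarrow> 0) at_top"
    using filterlim_compose[OF exp_at_bot] by blast
  then have "((\<lambda>x::real. - exp (- exp (x + \<mu>))) \<longlongrightarrow> - 0) at_top"
    by (rule tendsto_minus)
  then show ?thesis by simp
qed

lemma lim_B: "((\<lambda>u::real. (1 + u) * exp (- u)) \<longlongrightarrow> 0) at_top"
proof -
  have "((\<lambda>u::real. u ^ 0 / exp u + u ^ 1 / exp u) \<longlongrightarrow> 0 + 0) at_top"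
    by (intro tendsto_add tendsto_power_div_exp_0)
  moreover have "(\<lambda>u::real. u ^ 0 / exp u + u ^ 1 / exp u) = (\<lambda>u. (1 + u) * exp (- u))"
    by (auto simp: fun_eq_iff exp_minus field_simps)
  ultimately show ?thesis by simp
qed

lemma lim_C: "((\<lambda>k::real. exp (- exp (\<mu> - k))) \<longlongrightarrow> 1) at_top"
proof -
  have "((\<lambda>k::real. exp (- exp (\<mu> - k))) \<longlongrightarrow> exp (- 0)) at_top"
    by (intro tendsto_intros lim_exp_shift_bot)
  then show ?thesis by simp
qed

lemma EXT_sets:
  fixes M F :: "'a measure" and D :: "'d measure" and W :: "'a \<Rightarrow> 'd" and Y :: "'a \<Rightarrow> real"
    and V c :: "'a \<Rightarrow> ennreal" and K :: "'d \<Rightarrow> real measure"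
  assumes sf: "sigma_finite_subalgebra M F" and pM: "prob_space M"
    and W[measurable]: "W \<in> measurable F D" and Y[measurable]: "Y \<in> borel_measurable M"
    and V[measurable]: "V \<in> borel_measurable M"
    and c[measurable]: "c \<in> borel_measurable F" and cfin: "\<And>\<omega>. c \<omega> < \<infinity>"
    and Ksets: "\<And>x. x \<in> space D \<Longrightarrow> sets (K x) = sets borel"
    and Kbound: "\<And>x. x \<in> space D \<Longrightarrow> emeasure (K x) UNIV \<le> 1"
    and Kmeas: "\<And>\<Phi>. \<Phi> \<in> borel_measurable (D \<Otimes>\<^sub>M borel) \<Longrightarrow> (\<lambda>x. \<integral>\<^sup>+ y. \<Phi> (x,y) \<partial>K x) \<in> borel_measurable D"
    and cond: "\<And>S. S \<in> sets borel \<Longrightarrow> AE \<omega> in M. nn_cond_exp M F (\<lambda>\<omega>. V \<omega> * indicator S (Y \<omega>)) \<omega> = c \<omega> * emeasure (K (W \<omega>)) S"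
    and C[measurable]: "C \<in> sets (D \<Otimes>\<^sub>M borel)"
  shows "(\<integral>\<^sup>+\<omega>. V \<omega> * indicator C (W \<omega>, Y \<omega>) \<partial>M) = (\<integral>\<^sup>+\<omega>. c \<omega> * emeasure (K (W \<omega>)) (Pair (W \<omega>) -` C) \<partial>M)"
proof -
  interpret sigma_finite_subalgebra M F by (rule sf)
  have subM: "subalgebra M F" by (rule subalg)
  have spF: "space F = space M" using subM by (simp add: subalgebra_def)
  have WM[measurable]: "W \<in> measurable M D" using measurable_from_subalg[OF subM W] .
  have cM[measurable]: "c \<in> borel_measurable M" using measurable_from_subalg[OF subM c] .
  have Wsp: "\<And>\<omega>. \<omega> \<in> space M \<Longrightarrow> W \<omega> \<in> space D" using W spF measurable_space by metis
  have spK: "\<And>x. x \<in> space D \<Longrightarrow> space (K x) = UNIV"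
    by (metis Ksets sets_eq_imp_space_eq space_borel)
  define kap where "kap C x = emeasure (K x) (Pair x -` C)" for C x
  have kapI: "(\<lambda>x. kap C x) \<in> borel_measurable D" if "C \<in> sets (D \<Otimes>\<^sub>M borel)" for C
  proof -
    have "(\<lambda>x. \<integral>\<^sup>+ y. indicator C (x,y) \<partial>K x) \<in> borel_measurable D"
      using Kmeas that by measurable
    moreover have "\<And>x. x \<in> space D \<Longrightarrow> (\<integral>\<^sup>+ y. indicator C (x,y) \<partial>K x) = kap C x"
    proof -
      fix x assume x: "x \<in> space D"
      have "Pair x -` C \<in> sets (K x)" using sets_Pair1[OF that] Ksets[OF x] by simp
      moreover have "(\<lambda>y. indicator C (x,y) :: ennreal) = indicator (Pair x -` C)"
        by (auto simp: indicator_def)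
      ultimately show "(\<integral>\<^sup>+ y. indicator C (x,y) \<partial>K x) = kap C x"
        unfolding kap_def by simp
    qed
    ultimately show ?thesis by (metis (no_types, lifting) measurable_cong)
  qed
  define ind where "ind j \<omega> = (indicator {\<omega>. c \<omega> \<le> of_nat j} \<omega> :: ennreal)" for j \<omega>
  have indF[measurable]: "ind j \<in> borel_measurable F" for j
  proof -
    have "{\<omega> \<in> space F. c \<omega> \<le> of_nat j} \<in> sets F" by measurable
    then have "(indicator {\<omega> \<in> space F. c \<omega> \<le> of_nat j} :: _ \<Rightarrow> ennreal) \<in> borel_measurable F" by simp
    then show ?thesis unfolding ind_def
      by (rule measurable_cong[THEN iffD1, rotated]) (auto simp: indicator_def)
  qed
  have indM[measurable]: "ind j \<in> borel_measurable M" for j using measurable_from_subalg[OF subM indF] .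
  let ?L = "\<lambda>j C. \<integral>\<^sup>+\<omega>. V \<omega> * indicator C (W \<omega>, Y \<omega>) * ind j \<omega> \<partial>M"
  let ?R = "\<lambda>j C. \<integral>\<^sup>+\<omega>. c \<omega> * kap C (W \<omega>) * ind j \<omega> \<partial>M"
  have gen: "sets (D \<Otimes>\<^sub>M borel) = sigma_sets (space D \<times> UNIV) {a \<times> b | a b. a \<in> sets D \<and> b \<in> sets borel}"
    by (simp add: sets_pair_measure)
  have rect: "?L j (A \<times> S) = ?R j (A \<times> S)" if A: "A \<in> sets D" and S: "S \<in> sets borel" for A S j
  proof -
    have [measurable]: "A \<in> sets D" "S \<in> sets borel" using A S by auto
    have AW[measurable]: "(\<lambda>\<omega>. indicator A (W \<omega>) :: ennreal) \<in> borel_measurable F" by measurable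
    have "?L j (A \<times> S) = (\<integral>\<^sup>+\<omega>. (indicator A (W \<omega>) * ind j \<omega>) * (V \<omega> * indicator S (Y \<omega>)) \<partial>M)"
      by (intro nn_integral_cong) (auto simp: indicator_def mult_ac)
    also have "\<dots> = (\<integral>\<^sup>+\<omega>. (indicator A (W \<omega>) * ind j \<omega>) * nn_cond_exp M F (\<lambda>\<omega>. V \<omega> * indicator S (Y \<omega>)) \<omega> \<partial>M)"
      by (intro nn_cond_exp_intg[symmetric] borel_measurable_times_ennreal AW indF) measurable
    also have "\<dots> = (\<integral>\<^sup>+\<omega>. (indicator A (W \<omega>) * ind j \<omega>) * (c \<omega> * emeasure (K (W \<omega>)) S) \<partial>M)"
      using cond[OF S] by (intro nn_integral_cong_AE) auto
    also have "\<dots> = ?R j (A \<times> S)"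
    proof (intro nn_integral_cong)
      fix \<omega> assume "\<omega> \<in> space M"
      have "Pair (W \<omega>) -` (A \<times> S) = (if W \<omega> \<in> A then S else {})" by auto
      then show "(indicator A (W \<omega>) * ind j \<omega>) * (c \<omega> * emeasure (K (W \<omega>)) S) = c \<omega> * kap (A \<times> S) (W \<omega>) * ind j \<omega>"
        unfolding kap_def by (auto simp: indicator_def mult_ac)
    qed
    finally show ?thesis .
  qed
  have Lmeas[measurable]: "(\<lambda>\<omega>. V \<omega> * indicator C (W \<omega>, Y \<omega>) * ind j \<omega>) \<in> borel_measurable M"
    if "C \<in> sets (D \<Otimes>\<^sub>M borel)" for C j
    using that by measurable
  have Rmeas[measurable]: "(\<lambda>\<omega>. c \<omega> * kap C (W \<omega>) * ind j \<omega>) \<in> borel_measurable M"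
    if "C \<in> sets (D \<Otimes>\<^sub>M borel)" for C j
  proof -
    have "(\<lambda>\<omega>. kap C (W \<omega>)) \<in> borel_measurable M"
      using measurable_compose[OF WM kapI[OF that]] .
    then show ?thesis by measurable
  qed
  have totfin: "?R j (space D \<times> UNIV) < \<infinity>" for j
  proof -
    have "?R j (space D \<times> UNIV) \<le> (\<integral>\<^sup>+\<omega>. of_nat j \<partial>M)"
    proof (intro nn_integral_mono)
      fix \<omega> assume \<omega>: "\<omega> \<in> space M"
      have "kap (space D \<times> UNIV) (W \<omega>) \<le> 1"
        unfolding kap_def using Kbound[OF Wsp[OF \<omega>]] Wsp[OF \<omega>] by auto
      then show "c \<omega> * kap (space D \<times> UNIV) (W \<omega>) * ind j \<omega> \<le> of_nat j"
      proof (cases "c \<omega> \<le> of_nat j")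
        case True
        have "c \<omega> * kap (space D \<times> UNIV) (W \<omega>) \<le> of_nat j * 1"
          by (rule mult_mono) (use True \<open>kap _ _ \<le> 1\<close> in auto)
        then show ?thesis using True unfolding ind_def by simp
      next
        case False
        then show ?thesis unfolding ind_def by simp
      qed
    qed
    also have "\<dots> < \<infinity>" using prob_space.emeasure_space_1[OF pM] by (simp add: ennreal_mult_less_top of_nat_less_top)
    finally show ?thesis .
  qed
  let ?G = "{a \<times> b | a b. a \<in> sets D \<and> b \<in> sets (borel::real measure)}"
  have gclosed: "?G \<subseteq> Pow (space D \<times> UNIV)" by (auto dest: sets.sets_into_space)
  have OmS: "space D \<times> UNIV \<in> sets (D \<Otimes>\<^sub>M borel)"
    by (metis sets.top space_borel space_pair_measure)
  have step1: "?L j C = ?R j C" if "C \<in> sets (D \<Otimes>\<^sub>M borel)" for C j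
  proof -
    have "C \<in> sigma_sets (space D \<times> UNIV) ?G" using that unfolding gen .
    then show ?thesis
    proof (induction rule: sigma_sets_induct_disjoint[OF Int_stable_pair_measure_generator gclosed, consumes 1, case_names basic empty compl union])
      case (basic A)
      then show ?case using rect by auto
    next
      case empty
      show ?case unfolding kap_def by simp
    next
      case (compl A)
      have A: "A \<in> sets (D \<Otimes>\<^sub>M borel)" using compl(1) unfolding gen .
      have A2: "space D \<times> UNIV - A \<in> sets (D \<Otimes>\<^sub>M borel)" using A OmS by auto
      have "?L j (space D \<times> UNIV) = (\<integral>\<^sup>+\<omega>. V \<omega> * indicator A (W \<omega>, Y \<omega>) * ind j \<omega> + V \<omega> * indicator (space D \<times> UNIV - A) (W \<omega>, Y \<omega>) * ind j \<omega> \<partial>M)"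
        by (intro nn_integral_cong) (auto simp: indicator_def Wsp)
      also have "\<dots> = ?L j A + ?L j (space D \<times> UNIV - A)"
        using A A2 by (intro nn_integral_add Lmeas)
      finally have eL: "?L j (space D \<times> UNIV) = ?L j A + ?L j (space D \<times> UNIV - A)" .
      have "?R j (space D \<times> UNIV) = (\<integral>\<^sup>+\<omega>. c \<omega> * kap A (W \<omega>) * ind j \<omega> + c \<omega> * kap (space D \<times> UNIV - A) (W \<omega>) * ind j \<omega> \<partial>M)"
      proof (intro nn_integral_cong)
        fix \<omega> assume \<omega>: "\<omega> \<in> space M"
        let ?x = "W \<omega>"
        have x: "?x \<in> space D" using Wsp[OF \<omega>] .
        have s1: "Pair ?x -` A \<in> sets (K ?x)" using sets_Pair1[OF A] Ksets[OF x] by simp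
        have s2: "Pair ?x -` (space D \<times> UNIV - A) \<in> sets (K ?x)" using sets_Pair1[OF A2] Ksets[OF x] by simp
        have "kap (space D \<times> UNIV) ?x = kap A ?x + kap (space D \<times> UNIV - A) ?x"
        proof -
          have u: "Pair ?x -` A \<union> Pair ?x -` (space D \<times> UNIV - A) = Pair ?x -` (space D \<times> UNIV)"
            using x by auto
          have "Pair ?x -` A \<inter> Pair ?x -` (space D \<times> UNIV - A) = {}" by auto
          from plus_emeasure[OF s1 s2 this] show ?thesis unfolding kap_def u by simp
        qed
        then show "c \<omega> * kap (space D \<times> UNIV) (W \<omega>) * ind j \<omega> = c \<omega> * kap A (W \<omega>) * ind j \<omega> + c \<omega> * kap (space D \<times> UNIV - A) (W \<omega>) * ind j \<omega>"
          by (simp add: distrib_left distrib_right)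
      qed
      also have "\<dots> = ?R j A + ?R j (space D \<times> UNIV - A)"
        using A A2 by (intro nn_integral_add Rmeas)
      finally have eR: "?R j (space D \<times> UNIV) = ?R j A + ?R j (space D \<times> UNIV - A)" .
      have tot: "?L j (space D \<times> UNIV) = ?R j (space D \<times> UNIV)" by (rule rect) auto
      have le1: "?R j A \<le> ?R j (space D \<times> UNIV)" unfolding eR by simp
      have fin: "?R j A \<noteq> \<infinity>" using le_less_trans[OF le1 totfin[of j]] by auto
      have "?R j A + ?L j (space D \<times> UNIV - A) = ?L j A + ?L j (space D \<times> UNIV - A)"
        by (simp only: compl(2))
      also have "\<dots> = ?L j (space D \<times> UNIV)" by (simp only: eL)
      also have "\<dots> = ?R j (space D \<times> UNIV)" by (simp only: tot)
      also have "\<dots> = ?R j A + ?R j (space D \<times> UNIV - A)" by (simp only: eR)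
      finally have e: "?R j A + ?L j (space D \<times> UNIV - A) = ?R j A + ?R j (space D \<times> UNIV - A)" .
      show ?case using e fin unfolding ennreal_add_left_cancel by auto
    next
      case (union A)
      have A: "A i \<in> sets (D \<Otimes>\<^sub>M borel)" for i using union(2) unfolding gen by auto
      have UA: "(\<Union>i. A i) \<in> sets (D \<Otimes>\<^sub>M borel)" using A by auto
      have "?L j (\<Union>i. A i) = (\<integral>\<^sup>+\<omega>. (\<Sum>i. V \<omega> * indicator (A i) (W \<omega>, Y \<omega>) * ind j \<omega>) \<partial>M)"
        by (intro nn_integral_cong) (simp add: suminf_indicator[OF union(1)] ennreal_suminf_multc)
      also have "\<dots> = (\<Sum>i. ?L j (A i))"
        using A by (intro nn_integral_suminf Lmeas)
      finally have eL: "?L j (\<Union>i. A i) = (\<Sum>i. ?L j (A i))" .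
      have "?R j (\<Union>i. A i) = (\<integral>\<^sup>+\<omega>. (\<Sum>i. c \<omega> * kap (A i) (W \<omega>) * ind j \<omega>) \<partial>M)"
      proof (intro nn_integral_cong)
        fix \<omega> assume \<omega>: "\<omega> \<in> space M"
        let ?x = "W \<omega>"
        have x: "?x \<in> space D" using Wsp[OF \<omega>] .
        have s1: "range (\<lambda>i. Pair ?x -` A i) \<subseteq> sets (K ?x)" using sets_Pair1[OF A] Ksets[OF x] by auto
        have dj: "disjoint_family (\<lambda>i. Pair ?x -` A i)" using union(1) by (auto simp: disjoint_family_on_def)
        have "kap (\<Union>i. A i) ?x = (\<Sum>i. kap (A i) ?x)"
          unfolding kap_def using suminf_emeasure[OF s1 dj] by (simp add: vimage_Union)
        then show "c \<omega> * kap (\<Union>i. A i) (W \<omega>) * ind j \<omega> = (\<Sum>i. c \<omega> * kap (A i) (W \<omega>) * ind j \<omega>)"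
          by (simp add: ennreal_suminf_multc)
      qed
      also have "\<dots> = (\<Sum>i. ?R j (A i))"
        using A by (intro nn_integral_suminf Rmeas)
      finally have eR: "?R j (\<Union>i. A i) = (\<Sum>i. ?R j (A i))" .
      show ?case using eL eR union(3) by simp
    qed
  qed
  have supj: "(\<integral>\<^sup>+\<omega>. g \<omega> \<partial>M) = (SUP j. \<integral>\<^sup>+\<omega>. g \<omega> * ind j \<omega> \<partial>M)"
    if g[measurable]: "g \<in> borel_measurable M" for g
  proof -
    have inc: "incseq (\<lambda>j \<omega>. g \<omega> * ind j \<omega>)"
    proof (intro incseq_SucI le_funI)
      fix j \<omega>
      have "ind j \<omega> \<le> ind (Suc j) \<omega>"
        unfolding ind_def by (auto simp: indicator_def intro: order_trans)
      then show "g \<omega> * ind j \<omega> \<le> g \<omega> * ind (Suc j) \<omega>" by (rule mult_left_mono) simp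
    qed
    have pw: "(SUP j. g \<omega> * ind j \<omega>) = g \<omega>" for \<omega>
    proof (rule antisym)
      show "(SUP j. g \<omega> * ind j \<omega>) \<le> g \<omega>"
        by (rule SUP_least) (auto simp: ind_def indicator_def)
      obtain n where "c \<omega> < of_nat n" using ennreal_Ex_less_of_nat[OF cfin[of \<omega>, unfolded infinity_ennreal_def]] by auto
      then have "g \<omega> * ind n \<omega> = g \<omega>" by (auto simp: ind_def indicator_def)
      then show "g \<omega> \<le> (SUP j. g \<omega> * ind j \<omega>)" by (metis SUP_upper UNIV_I)
    qed
    have "(\<integral>\<^sup>+\<omega>. g \<omega> \<partial>M) = (\<integral>\<^sup>+\<omega>. (SUP j. g \<omega> * ind j \<omega>) \<partial>M)" by (simp add: pw)
    also have "\<dots> = (SUP j. \<integral>\<^sup>+\<omega>. g \<omega> * ind j \<omega> \<partial>M)"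
      using inc by (intro nn_integral_monotone_convergence_SUP) auto
    finally show ?thesis .
  qed
  have kC[measurable]: "(\<lambda>\<omega>. kap C (W \<omega>)) \<in> borel_measurable M"
    using measurable_compose[OF WM kapI[OF C]] .
  have "(\<integral>\<^sup>+\<omega>. V \<omega> * indicator C (W \<omega>, Y \<omega>) \<partial>M) = (SUP j. ?L j C)"
    using C by (intro supj) measurable
  also have "\<dots> = (SUP j. ?R j C)" using step1[OF C] by simp
  also have "\<dots> = (\<integral>\<^sup>+\<omega>. c \<omega> * kap C (W \<omega>) \<partial>M)"
    by (intro supj[symmetric]) measurable
  finally show ?thesis unfolding kap_def .
qed


lemma EXT:
  fixes M F :: "'a measure" and D :: "'d measure" and W :: "'a \<Rightarrow> 'd" and Y :: "'a \<Rightarrow> real"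
    and V c :: "'a \<Rightarrow> ennreal" and K :: "'d \<Rightarrow> real measure"
  assumes sf: "sigma_finite_subalgebra M F" and pM: "prob_space M"
    and W[measurable]: "W \<in> measurable F D" and Y[measurable]: "Y \<in> borel_measurable M"
    and V[measurable]: "V \<in> borel_measurable M"
    and c[measurable]: "c \<in> borel_measurable F" and cfin: "\<And>\<omega>. c \<omega> < \<infinity>"
    and Ksets: "\<And>x. x \<in> space D \<Longrightarrow> sets (K x) = sets borel"
    and Kbound: "\<And>x. x \<in> space D \<Longrightarrow> emeasure (K x) UNIV \<le> 1"
    and Kmeas: "\<And>\<Phi>. \<Phi> \<in> borel_measurable (D \<Otimes>\<^sub>M borel) \<Longrightarrow> (\<lambda>x. \<integral>\<^sup>+ y. \<Phi> (x,y) \<partial>K x) \<in> borel_measurable D"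
    and cond: "\<And>S. S \<in> sets borel \<Longrightarrow> AE \<omega> in M. nn_cond_exp M F (\<lambda>\<omega>. V \<omega> * indicator S (Y \<omega>)) \<omega> = c \<omega> * emeasure (K (W \<omega>)) S"
    and Phi: "\<Phi> \<in> borel_measurable (D \<Otimes>\<^sub>M borel)"
  shows "(\<integral>\<^sup>+\<omega>. V \<omega> * \<Phi> (W \<omega>, Y \<omega>) \<partial>M) = (\<integral>\<^sup>+\<omega>. c \<omega> * (\<integral>\<^sup>+ y. \<Phi> (W \<omega>, y) \<partial>K (W \<omega>)) \<partial>M)"
proof -
  interpret sigma_finite_subalgebra M F by (rule sf)
  have subM: "subalgebra M F" by (rule subalg)
  have spF: "space F = space M" using subM by (simp add: subalgebra_def)
  have WM[measurable]: "W \<in> measurable M D" using measurable_from_subalg[OF subM W] .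
  have cM[measurable]: "c \<in> borel_measurable M" using measurable_from_subalg[OF subM c] .
  have Wsp: "\<And>\<omega>. \<omega> \<in> space M \<Longrightarrow> W \<omega> \<in> space D" using W spF measurable_space by metis
  have innerM[measurable]: "(\<lambda>\<omega>. \<integral>\<^sup>+ y. u (W \<omega>, y) \<partial>K (W \<omega>)) \<in> borel_measurable M"
    if "u \<in> borel_measurable (D \<Otimes>\<^sub>M borel)" for u
    using measurable_compose[OF WM Kmeas[OF that]] by simp
  have secM: "(\<lambda>y. u (x, y)) \<in> borel_measurable (K x)"
    if "u \<in> borel_measurable (D \<Otimes>\<^sub>M borel)" "x \<in> space D" for u x
    using measurable_compose_Pair1[OF that(2) that(1)] Ksets[OF that(2)]
    by (simp cong: measurable_cong_sets)
  have spP: "(x, y) \<in> space (D \<Otimes>\<^sub>M borel)" if "x \<in> space D" for x y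
    using that by (simp add: space_pair_measure)
  show ?thesis
  using Phi proof (induction rule: borel_measurable_induct)
    case (cong f g)
    have "(\<integral>\<^sup>+\<omega>. V \<omega> * f (W \<omega>, Y \<omega>) \<partial>M) = (\<integral>\<^sup>+\<omega>. V \<omega> * g (W \<omega>, Y \<omega>) \<partial>M)"
      by (intro nn_integral_cong) (simp add: cong(3)[OF spP[OF Wsp]])
    moreover have "(\<integral>\<^sup>+\<omega>. c \<omega> * (\<integral>\<^sup>+ y. f (W \<omega>, y) \<partial>K (W \<omega>)) \<partial>M) = (\<integral>\<^sup>+\<omega>. c \<omega> * (\<integral>\<^sup>+ y. g (W \<omega>, y) \<partial>K (W \<omega>)) \<partial>M)"
      by (intro nn_integral_cong) (simp add: cong(3)[OF spP[OF Wsp]])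
    ultimately show ?case using cong(4) by simp
  next
    case (set A)
    have "(\<integral>\<^sup>+\<omega>. V \<omega> * indicator A (W \<omega>, Y \<omega>) \<partial>M) = (\<integral>\<^sup>+\<omega>. c \<omega> * emeasure (K (W \<omega>)) (Pair (W \<omega>) -` A) \<partial>M)"
      by (rule EXT_sets[OF sf pM W Y V c cfin Ksets Kbound Kmeas cond set])
    also have "\<dots> = (\<integral>\<^sup>+\<omega>. c \<omega> * (\<integral>\<^sup>+ y. indicator A (W \<omega>, y) \<partial>K (W \<omega>)) \<partial>M)"
    proof (intro nn_integral_cong)
      fix \<omega> assume \<omega>: "\<omega> \<in> space M"
      have "Pair (W \<omega>) -` A \<in> sets (K (W \<omega>))" using sets_Pair1[OF set] Ksets[OF Wsp[OF \<omega>]] by simp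
      moreover have "(\<lambda>y. indicator A (W \<omega>, y) :: ennreal) = indicator (Pair (W \<omega>) -` A)"
        by (auto simp: indicator_def)
      ultimately show "c \<omega> * emeasure (K (W \<omega>)) (Pair (W \<omega>) -` A) = c \<omega> * (\<integral>\<^sup>+ y. indicator A (W \<omega>, y) \<partial>K (W \<omega>))"
        by simp
    qed
    finally show ?case .
  next
    case (mult u a)
    note [measurable] = mult(2) innerM[OF mult(2)]
    have "(\<integral>\<^sup>+\<omega>. V \<omega> * (a * u (W \<omega>, Y \<omega>)) \<partial>M) = a * (\<integral>\<^sup>+\<omega>. V \<omega> * u (W \<omega>, Y \<omega>) \<partial>M)"
    proof -
      have "(\<integral>\<^sup>+\<omega>. V \<omega> * (a * u (W \<omega>, Y \<omega>)) \<partial>M) = (\<integral>\<^sup>+\<omega>. a * (V \<omega> * u (W \<omega>, Y \<omega>)) \<partial>M)"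
        by (simp add: mult_ac)
      also have "\<dots> = a * (\<integral>\<^sup>+\<omega>. V \<omega> * u (W \<omega>, Y \<omega>) \<partial>M)"
        using mult(2) by (intro nn_integral_cmult) measurable
      finally show ?thesis .
    qed
    also have "\<dots> = a * (\<integral>\<^sup>+\<omega>. c \<omega> * (\<integral>\<^sup>+ y. u (W \<omega>, y) \<partial>K (W \<omega>)) \<partial>M)" using mult(4) by simp
    also have "\<dots> = (\<integral>\<^sup>+\<omega>. a * (c \<omega> * (\<integral>\<^sup>+ y. u (W \<omega>, y) \<partial>K (W \<omega>))) \<partial>M)"
      using mult(2) by (intro nn_integral_cmult[symmetric]) measurable
    also have "\<dots> = (\<integral>\<^sup>+\<omega>. c \<omega> * (\<integral>\<^sup>+ y. a * u (W \<omega>, y) \<partial>K (W \<omega>)) \<partial>M)"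
    proof (intro nn_integral_cong)
      fix \<omega> assume \<omega>: "\<omega> \<in> space M"
      have "(\<integral>\<^sup>+ y. a * u (W \<omega>, y) \<partial>K (W \<omega>)) = a * (\<integral>\<^sup>+ y. u (W \<omega>, y) \<partial>K (W \<omega>))"
        using secM[OF mult(2) Wsp[OF \<omega>]] by (rule nn_integral_cmult)
      then show "a * (c \<omega> * (\<integral>\<^sup>+ y. u (W \<omega>, y) \<partial>K (W \<omega>))) = c \<omega> * (\<integral>\<^sup>+ y. a * u (W \<omega>, y) \<partial>K (W \<omega>))"
        by (simp add: mult_ac)
    qed
    finally show ?case .
  next
    case (add u v)
    have um[measurable]: "u \<in> borel_measurable (D \<Otimes>\<^sub>M borel)" and vm[measurable]: "v \<in> borel_measurable (D \<Otimes>\<^sub>M borel)"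
      using add by auto
    note [measurable] = innerM[OF um] innerM[OF vm]
    have IHu: "(\<integral>\<^sup>+\<omega>. V \<omega> * u (W \<omega>, Y \<omega>) \<partial>M) = (\<integral>\<^sup>+\<omega>. c \<omega> * (\<integral>\<^sup>+ y. u (W \<omega>, y) \<partial>K (W \<omega>)) \<partial>M)"
      and IHv: "(\<integral>\<^sup>+\<omega>. V \<omega> * v (W \<omega>, Y \<omega>) \<partial>M) = (\<integral>\<^sup>+\<omega>. c \<omega> * (\<integral>\<^sup>+ y. v (W \<omega>, y) \<partial>K (W \<omega>)) \<partial>M)"
      using add by auto
    have "(\<integral>\<^sup>+\<omega>. V \<omega> * (v (W \<omega>, Y \<omega>) + u (W \<omega>, Y \<omega>)) \<partial>M) = (\<integral>\<^sup>+\<omega>. V \<omega> * v (W \<omega>, Y \<omega>) + V \<omega> * u (W \<omega>, Y \<omega>) \<partial>M)"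
      by (simp add: distrib_left)
    also have "\<dots> = (\<integral>\<^sup>+\<omega>. V \<omega> * v (W \<omega>, Y \<omega>) \<partial>M) + (\<integral>\<^sup>+\<omega>. V \<omega> * u (W \<omega>, Y \<omega>) \<partial>M)"
      by (intro nn_integral_add) measurable
    also have "\<dots> = (\<integral>\<^sup>+\<omega>. c \<omega> * (\<integral>\<^sup>+ y. v (W \<omega>, y) \<partial>K (W \<omega>)) \<partial>M) + (\<integral>\<^sup>+\<omega>. c \<omega> * (\<integral>\<^sup>+ y. u (W \<omega>, y) \<partial>K (W \<omega>)) \<partial>M)"
      using IHu IHv by simp
    also have "\<dots> = (\<integral>\<^sup>+\<omega>. c \<omega> * (\<integral>\<^sup>+ y. v (W \<omega>, y) \<partial>K (W \<omega>)) + c \<omega> * (\<integral>\<^sup>+ y. u (W \<omega>, y) \<partial>K (W \<omega>)) \<partial>M)"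
      by (intro nn_integral_add[symmetric]) measurable
    also have "\<dots> = (\<integral>\<^sup>+\<omega>. c \<omega> * (\<integral>\<^sup>+ y. v (W \<omega>, y) + u (W \<omega>, y) \<partial>K (W \<omega>)) \<partial>M)"
    proof (intro nn_integral_cong)
      fix \<omega> assume \<omega>: "\<omega> \<in> space M"
      have "(\<integral>\<^sup>+ y. v (W \<omega>, y) + u (W \<omega>, y) \<partial>K (W \<omega>)) = (\<integral>\<^sup>+ y. v (W \<omega>, y) \<partial>K (W \<omega>)) + (\<integral>\<^sup>+ y. u (W \<omega>, y) \<partial>K (W \<omega>))"
        using secM[OF vm Wsp[OF \<omega>]] secM[OF um Wsp[OF \<omega>]] by (rule nn_integral_add)
      then show "c \<omega> * (\<integral>\<^sup>+ y. v (W \<omega>, y) \<partial>K (W \<omega>)) + c \<omega> * (\<integral>\<^sup>+ y. u (W \<omega>, y) \<partial>K (W \<omega>)) = c \<omega> * (\<integral>\<^sup>+ y. v (W \<omega>, y) + u (W \<omega>, y) \<partial>K (W \<omega>))"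
        by (simp add: distrib_left)
    qed
    finally show ?case .
  next
    case (seq U)
    have Um[measurable]: "U i \<in> borel_measurable (D \<Otimes>\<^sub>M borel)" for i using seq(1) .
    note [measurable] = innerM[OF Um]
    have IH: "(\<integral>\<^sup>+\<omega>. V \<omega> * U i (W \<omega>, Y \<omega>) \<partial>M) = (\<integral>\<^sup>+\<omega>. c \<omega> * (\<integral>\<^sup>+ y. U i (W \<omega>, y) \<partial>K (W \<omega>)) \<partial>M)" for i
      using seq by auto
    have "(\<integral>\<^sup>+\<omega>. V \<omega> * (SUP i. U i) (W \<omega>, Y \<omega>) \<partial>M) = (\<integral>\<^sup>+\<omega>. (SUP i. V \<omega> * U i (W \<omega>, Y \<omega>)) \<partial>M)"
      by (simp add: SUP_mult_left_ennreal image_comp)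
    also have "\<dots> = (SUP i. \<integral>\<^sup>+\<omega>. V \<omega> * U i (W \<omega>, Y \<omega>) \<partial>M)"
    proof (intro nn_integral_monotone_convergence_SUP)
      show "incseq (\<lambda>i \<omega>. V \<omega> * U i (W \<omega>, Y \<omega>))"
        using \<open>incseq U\<close> by (auto simp: incseq_def le_fun_def intro!: mult_left_mono)
    qed measurable
    also have "\<dots> = (SUP i. \<integral>\<^sup>+\<omega>. c \<omega> * (\<integral>\<^sup>+ y. U i (W \<omega>, y) \<partial>K (W \<omega>)) \<partial>M)"
      using IH by simp
    also have "\<dots> = (\<integral>\<^sup>+\<omega>. (SUP i. c \<omega> * (\<integral>\<^sup>+ y. U i (W \<omega>, y) \<partial>K (W \<omega>))) \<partial>M)"
    proof (intro nn_integral_monotone_convergence_SUP[symmetric])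
      show "incseq (\<lambda>i \<omega>. c \<omega> * (\<integral>\<^sup>+ y. U i (W \<omega>, y) \<partial>K (W \<omega>)))"
        using \<open>incseq U\<close> by (auto simp: incseq_def le_fun_def intro!: mult_left_mono nn_integral_mono)
    qed measurable
    also have "\<dots> = (\<integral>\<^sup>+\<omega>. c \<omega> * (\<integral>\<^sup>+ y. (SUP i. U i) (W \<omega>, y) \<partial>K (W \<omega>)) \<partial>M)"
    proof (intro nn_integral_cong)
      fix \<omega> assume \<omega>: "\<omega> \<in> space M"
      have "(\<integral>\<^sup>+ y. (SUP i. U i (W \<omega>, y)) \<partial>K (W \<omega>)) = (SUP i. (\<integral>\<^sup>+ y. U i (W \<omega>, y) \<partial>K (W \<omega>)))"
      proof (intro nn_integral_monotone_convergence_SUP)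
        show "incseq (\<lambda>i y. U i (W \<omega>, y))"
          using \<open>incseq U\<close> by (auto simp: incseq_def le_fun_def)
      qed (rule secM[OF Um Wsp[OF \<omega>]])
      then show "(SUP i. c \<omega> * (\<integral>\<^sup>+ y. U i (W \<omega>, y) \<partial>K (W \<omega>))) = c \<omega> * (\<integral>\<^sup>+ y. (SUP i. U i) (W \<omega>, y) \<partial>K (W \<omega>))"
        by (simp add: SUP_mult_left_ennreal image_comp)
    qed
    finally show ?case .
  qed
qed

lemma gd_meas[measurable]: "(\<lambda>t. gumbel_density \<mu> t) \<in> borel_measurable borel"
  unfolding gumbel_density_def by measurable

lemma reflect_le:
  fixes f :: "real \<Rightarrow> real"
  assumes [measurable]: "f \<in> borel_measurable borel"
  shows "(\<integral>\<^sup>+ t. ennreal (f t) * indicator {t. ereal t \<le> ereal k} t \<partial>lborel)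
       = (\<integral>\<^sup>+ x. ennreal (f (- x)) * indicator {-k..} x \<partial>lborel)"
proof -
  have "(\<integral>\<^sup>+ t. ennreal (f t) * indicator {t. ereal t \<le> ereal k} t \<partial>lborel)
      = ennreal \<bar>-1::real\<bar> * (\<integral>\<^sup>+ x. ennreal (f (0 + -1 * x)) * indicator {t. ereal t \<le> ereal k} (0 + -1 * x) \<partial>lborel)"
    by (rule nn_integral_real_affine) measurable
  also have "\<dots> = (\<integral>\<^sup>+ x. ennreal (f (- x)) * indicator {-k..} x \<partial>lborel)"
    by (auto simp: indicator_def intro!: nn_integral_cong)
  finally show ?thesis .
qed

lemma gum_Z_real:
  "(\<integral>\<^sup>+ t. ennreal (gumbel_density \<mu> t) * indicator {t. ereal t \<le> ereal k} t \<partial>lborel)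
    = ennreal (exp (- exp (\<mu> - k)))"
proof -
  have "(\<integral>\<^sup>+ t. ennreal (gumbel_density \<mu> t) * indicator {t. ereal t \<le> ereal k} t \<partial>lborel)
    = (\<integral>\<^sup>+ x. ennreal (gumbel_density \<mu> (- x)) * indicator {-k..} x \<partial>lborel)"
    by (rule reflect_le) measurable
  also have "\<dots> = ennreal (0 - (- exp (- exp (- k + \<mu>))))"
  proof (rule nn_integral_FTC_atLeast[where F = "\<lambda>x. - exp (- exp (x + \<mu>))"])
    show "(\<lambda>x. gumbel_density \<mu> (- x)) \<in> borel_measurable borel" unfolding gumbel_density_def by measurable
    fix x :: real
    show "((\<lambda>x. - exp (- exp (x + \<mu>))) has_real_derivative gumbel_density \<mu> (- x)) (at x)"
      unfolding gumbel_density_def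
      by (auto intro!: derivative_eq_intros simp: exp_add[symmetric] algebra_simps)
    show "0 \<le> gumbel_density \<mu> (- x)" unfolding gumbel_density_def by simp
  next
    show "((\<lambda>x. - exp (- exp (x + \<mu>))) \<longlongrightarrow> 0) at_top" by (rule lim_A)
  qed
  also have "\<dots> = ennreal (exp (- exp (\<mu> - k)))" by simp
  finally show ?thesis .
qed

lemma gum_E_real:
  "(\<integral>\<^sup>+ t. ennreal (exp (- t) * gumbel_density \<mu> t) * indicator {t. ereal t \<le> ereal k} t \<partial>lborel)
    = ennreal (exp (- \<mu>) * (1 + exp (\<mu> - k)) * exp (- exp (\<mu> - k)))"
proof -
  have "(\<integral>\<^sup>+ t. ennreal (exp (- t) * gumbel_density \<mu> t) * indicator {t. ereal t \<le> ereal k} t \<partial>lborel)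
    = (\<integral>\<^sup>+ x. ennreal (exp (- (- x)) * gumbel_density \<mu> (- x)) * indicator {-k..} x \<partial>lborel)"
    by (rule reflect_le) measurable
  also have "\<dots> = ennreal (0 - (- (exp (- \<mu>) * (1 + exp (- k + \<mu>)) * exp (- exp (- k + \<mu>)))))"
  proof (rule nn_integral_FTC_atLeast[where F = "\<lambda>x. - (exp (- \<mu>) * (1 + exp (x + \<mu>)) * exp (- exp (x + \<mu>)))"])
    show "(\<lambda>x. exp (- (- x)) * gumbel_density \<mu> (- x)) \<in> borel_measurable borel" unfolding gumbel_density_def by measurable
    fix x :: real
    have r: "exp (- (- x)) * exp (- (- x - \<mu>) - exp (- (- x - \<mu>))) = exp(-\<mu>) * exp(x+\<mu>) * exp(x+\<mu>) * exp(-exp(x+\<mu>::real))"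
      by (simp add: mult_exp_exp algebra_simps)
    show "((\<lambda>x. - (exp (- \<mu>) * (1 + exp (x + \<mu>)) * exp (- exp (x + \<mu>)))) has_real_derivative exp (- (- x)) * gumbel_density \<mu> (- x)) (at x)"
      unfolding gumbel_density_def
      apply (rule derivative_eq_intros refl)+
      apply (simp only: r)
      apply (simp add: algebra_simps)
      done
    show "0 \<le> exp (- (- x)) * gumbel_density \<mu> (- x)" unfolding gumbel_density_def by simp
  next
    have g: "((\<lambda>u::real. (1 + u) * exp (- u)) \<longlongrightarrow> 0) at_top" by (rule lim_B)
    have e: "filterlim (\<lambda>x. exp (x + \<mu>)) at_top at_top" by (rule lim_exp_shift_top)
    have "((\<lambda>x. (1 + exp (x + \<mu>)) * exp (- exp (x + \<mu>))) \<longlongrightarrow> 0) at_top"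
      using filterlim_compose[OF g e] by simp
    then have "((\<lambda>x. - (exp (- \<mu>) * ((1 + exp (x + \<mu>)) * exp (- exp (x + \<mu>))))) \<longlongrightarrow> - (exp (- \<mu>) * 0)) at_top"
      by (intro tendsto_intros)
    then show "((\<lambda>x. - (exp (- \<mu>) * (1 + exp (x + \<mu>)) * exp (- exp (x + \<mu>)))) \<longlongrightarrow> 0) at_top" by (simp add: mult.assoc)
  qed
  also have "\<dots> = ennreal (exp (- \<mu>) * (1 + exp (\<mu> - k)) * exp (- exp (\<mu> - k)))" by simp
  finally show ?thesis .
qed

lemma int_to_inf:
  fixes f :: "real \<Rightarrow> real"
  assumes [measurable]: "f \<in> borel_measurable borel" and nn: "\<And>t. 0 \<le> f t"
    and Fk: "\<And>k. (\<integral>\<^sup>+ t. ennreal (f t) * indicator {t. ereal t \<le> ereal k} t \<partial>lborel) = ennreal (F k)"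
    and lim: "(F \<longlongrightarrow> L) at_top"
  shows "(\<integral>\<^sup>+ t. ennreal (f t) * indicator {t. ereal t \<le> \<infinity>} t \<partial>lborel) = ennreal L"
proof -
  have inc: "incseq (\<lambda>j t. ennreal (f t) * indicator {t. ereal t \<le> ereal (real j)} t)"
    by (intro incseq_SucI le_funI) (auto simp: indicator_def)
  have pw: "(SUP j. ennreal (f t) * indicator {t. ereal t \<le> ereal (real j)} t) = ennreal (f t) * indicator {t. ereal t \<le> \<infinity>} t" for t
  proof -
    obtain n :: nat where "t \<le> real n" using real_arch_simple by blast
    then have "t \<in> {t. ereal t \<le> ereal (real n)}" by simp
    then have eqn: "ennreal (f t) * indicator {t. ereal t \<le> ereal (real n)} t = ennreal (f t)" by simp
    have "ennreal (f t) * indicator {t. ereal t \<le> ereal (real n)} t \<le> (SUP j. ennreal (f t) * indicator {t. ereal t \<le> ereal (real j)} t)"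
      by (rule SUP_upper) simp
    then have "ennreal (f t) \<le> (SUP j. ennreal (f t) * indicator {t. ereal t \<le> ereal (real j)} t)"
      unfolding eqn .
    moreover have "(SUP j. ennreal (f t) * indicator {t. ereal t \<le> ereal (real j)} t) \<le> ennreal (f t)"
      by (rule SUP_least) (auto simp: indicator_def)
    ultimately show ?thesis by (simp add: indicator_def)
  qed
  have "(\<integral>\<^sup>+ t. ennreal (f t) * indicator {t. ereal t \<le> \<infinity>} t \<partial>lborel)
      = (\<integral>\<^sup>+ t. (SUP j. ennreal (f t) * indicator {t. ereal t \<le> ereal (real j)} t) \<partial>lborel)"
    by (rule nn_integral_cong) (rule pw[symmetric])
  also have "\<dots> = (SUP j. \<integral>\<^sup>+ t. ennreal (f t) * indicator {t. ereal t \<le> ereal (real j)} t \<partial>lborel)"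
    using inc by (intro nn_integral_monotone_convergence_SUP) measurable
  also have "\<dots> = (SUP j. ennreal (F (real j)))" by (simp only: Fk)
  also have "\<dots> = ennreal L"
  proof -
    have incF: "incseq (\<lambda>j. ennreal (F (real j)))"
    proof (intro incseq_SucI)
      fix j
      have "(\<integral>\<^sup>+ t. ennreal (f t) * indicator {t. ereal t \<le> ereal (real j)} t \<partial>lborel) \<le> (\<integral>\<^sup>+ t. ennreal (f t) * indicator {t. ereal t \<le> ereal (real (Suc j))} t \<partial>lborel)"
        using inc by (intro nn_integral_mono) (auto simp: incseq_Suc_iff le_fun_def)
      then show "ennreal (F (real j)) \<le> ennreal (F (real (Suc j)))" by (simp only: Fk)
    qed
    have "(\<lambda>j. F (real j)) \<longlonglongrightarrow> L"
      using filterlim_compose[OF lim filterlim_real_sequentially] .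
    then have "(\<lambda>j. ennreal (F (real j))) \<longlonglongrightarrow> ennreal L" by (rule tendsto_ennrealI)
    from LIMSEQ_unique[OF LIMSEQ_SUP[OF incF] this] show ?thesis .
  qed
  finally show ?thesis .
qed

lemma gum_Z_inf:
  "(\<integral>\<^sup>+ t. ennreal (gumbel_density \<mu> t) * indicator {t. ereal t \<le> \<infinity>} t \<partial>lborel) = 1"
proof -
  have "(\<integral>\<^sup>+ t. ennreal (gumbel_density \<mu> t) * indicator {t. ereal t \<le> \<infinity>} t \<partial>lborel) = ennreal 1"
  proof (rule int_to_inf[OF _ _ gum_Z_real])
    show "((\<lambda>k. exp (- exp (\<mu> - k))) \<longlongrightarrow> 1) at_top" by (rule lim_C)
  qed (auto simp: gumbel_density_def)
  then show ?thesis by simp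
qed

lemma gum_E_inf:
  "(\<integral>\<^sup>+ t. ennreal (exp (- t) * gumbel_density \<mu> t) * indicator {t. ereal t \<le> \<infinity>} t \<partial>lborel) = ennreal (exp (- \<mu>))"
proof (rule int_to_inf[OF _ _ gum_E_real])
  have h: "((\<lambda>k. exp (\<mu> - k)) \<longlongrightarrow> 0) at_top" by (rule lim_exp_shift_bot)
  have "((\<lambda>k. exp (- \<mu>) * (1 + exp (\<mu> - k)) * exp (- exp (\<mu> - k))) \<longlongrightarrow> exp (- \<mu>) * (1 + 0) * exp (- 0)) at_top"
    by (intro tendsto_intros h)
  then show "((\<lambda>k. exp (- \<mu>) * (1 + exp (\<mu> - k)) * exp (- exp (\<mu> - k))) \<longlongrightarrow> exp (- \<mu>)) at_top" by simp
qed (auto simp: gumbel_density_def)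

definition Zc :: "real \<Rightarrow> ereal \<Rightarrow> real" where
  "Zc \<mu> \<kappa> = (if \<kappa> = \<infinity> then 1 else exp (- exp (\<mu> - real_of_ereal \<kappa>)))"
definition Ec :: "real \<Rightarrow> ereal \<Rightarrow> real" where
  "Ec \<mu> \<kappa> = (if \<kappa> = \<infinity> then exp (- \<mu>) else exp (- \<mu>) * (1 + exp (\<mu> - real_of_ereal \<kappa>)) * exp (- exp (\<mu> - real_of_ereal \<kappa>)))"

lemma Zc_eq:
  assumes "\<kappa> \<noteq> - \<infinity>"
  shows "(\<integral>\<^sup>+ t. ennreal (gumbel_density \<mu> t) * indicator {t. ereal t \<le> \<kappa>} t \<partial>lborel) = ennreal (Zc \<mu> \<kappa>)"
proof (cases \<kappa>)
  case (real r) show ?thesis unfolding real Zc_def gum_Z_real by simp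
next
  case PInf show ?thesis unfolding PInf Zc_def gum_Z_inf by simp
next
  case MInf with assms show ?thesis by simp
qed

lemma Ec_eq:
  assumes "\<kappa> \<noteq> - \<infinity>"
  shows "(\<integral>\<^sup>+ t. ennreal (exp (- t) * gumbel_density \<mu> t) * indicator {t. ereal t \<le> \<kappa>} t \<partial>lborel) = ennreal (Ec \<mu> \<kappa>)"
proof (cases \<kappa>)
  case (real r) show ?thesis unfolding real Ec_def gum_E_real by simp
next
  case PInf show ?thesis unfolding PInf Ec_def gum_E_inf by simp
next
  case MInf with assms show ?thesis by simp
qed

lemma Zc_pos: "0 < Zc \<mu> \<kappa>" by (simp add: Zc_def)

lemma TG_sets[measurable_cong]: "sets (TG \<mu> \<kappa>) = sets borel"
  by (simp add: TG_def)

lemma TG_dens_meas[measurable]: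
  "(\<lambda>g. ennreal (gumbel_density \<mu> g) * indicator {t. ereal t \<le> \<kappa>} g) \<in> borel_measurable borel"
proof -
  have "{t::real. ereal t \<le> \<kappa>} \<in> sets borel" by measurable
  then show ?thesis by measurable
qed

lemma TG_int:
  assumes k: "\<kappa> \<noteq> - \<infinity>" and f[measurable]: "f \<in> borel_measurable borel"
  shows "(\<integral>\<^sup>+ g. f g \<partial>TG \<mu> \<kappa>) = (\<integral>\<^sup>+ g. ennreal (gumbel_density \<mu> g) * indicator {t. ereal t \<le> \<kappa>} g * f g \<partial>lborel) / ennreal (Zc \<mu> \<kappa>)"
proof -
  have "(\<integral>\<^sup>+ g. f g \<partial>TG \<mu> \<kappa>) = (\<integral>\<^sup>+ g. ennreal (gumbel_density \<mu> g) * indicator {t. ereal t \<le> \<kappa>} g / ennreal (Zc \<mu> \<kappa>) * f g \<partial>lborel)"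
    unfolding TG_def Zc_eq[OF k] by (subst nn_integral_density) auto
  also have "\<dots> = (\<integral>\<^sup>+ g. (ennreal (gumbel_density \<mu> g) * indicator {t. ereal t \<le> \<kappa>} g * f g) * inverse (ennreal (Zc \<mu> \<kappa>)) \<partial>lborel)"
    by (simp add: divide_ennreal_def mult_ac)
  also have "\<dots> = (\<integral>\<^sup>+ g. ennreal (gumbel_density \<mu> g) * indicator {t. ereal t \<le> \<kappa>} g * f g \<partial>lborel) * inverse (ennreal (Zc \<mu> \<kappa>))"
    by (rule nn_integral_multc) measurable
  finally show ?thesis by (simp add: divide_ennreal_def)
qed

lemma TG_prob:
  assumes k: "\<kappa> \<noteq> - \<infinity>"
  shows "prob_space (TG \<mu> \<kappa>)"
proof
  have "emeasure (TG \<mu> \<kappa>) (space (TG \<mu> \<kappa>)) = (\<integral>\<^sup>+ g. 1 \<partial>TG \<mu> \<kappa>)" by simp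
  also have "\<dots> = (\<integral>\<^sup>+ g. ennreal (gumbel_density \<mu> g) * indicator {t. ereal t \<le> \<kappa>} g \<partial>lborel) / ennreal (Zc \<mu> \<kappa>)"
    using TG_int[OF k, of "\<lambda>_. 1"] by simp
  also have "\<dots> = 1" unfolding Zc_eq[OF k] using Zc_pos[of \<mu> \<kappa>] by (simp add: divide_ennreal)
  finally show "emeasure (TG \<mu> \<kappa>) (space (TG \<mu> \<kappa>)) = 1" .
qed

lemma TG_exp:
  assumes k: "\<kappa> \<noteq> - \<infinity>"
  shows "(\<integral>\<^sup>+ g. ennreal (exp (- g)) \<partial>TG \<mu> \<kappa>) = ennreal (exp (- \<mu>)) + (if \<kappa> = \<infinity> then 0 else ennreal (exp (- real_of_ereal \<kappa>)))"
proof -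
  have "(\<integral>\<^sup>+ g. ennreal (exp (- g)) \<partial>TG \<mu> \<kappa>) = (\<integral>\<^sup>+ g. ennreal (gumbel_density \<mu> g) * indicator {t. ereal t \<le> \<kappa>} g * ennreal (exp (- g)) \<partial>lborel) / ennreal (Zc \<mu> \<kappa>)"
    by (rule TG_int[OF k]) measurable
  also have "(\<integral>\<^sup>+ g. ennreal (gumbel_density \<mu> g) * indicator {t. ereal t \<le> \<kappa>} g * ennreal (exp (- g)) \<partial>lborel)
     = (\<integral>\<^sup>+ t. ennreal (exp (- t) * gumbel_density \<mu> t) * indicator {t. ereal t \<le> \<kappa>} t \<partial>lborel)"
    by (intro nn_integral_cong) (auto simp: ennreal_mult gumbel_density_def indicator_def mult.commute)
  also have "\<dots> = ennreal (Ec \<mu> \<kappa>)" by (rule Ec_eq[OF k])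
  also have "ennreal (Ec \<mu> \<kappa>) / ennreal (Zc \<mu> \<kappa>) = ennreal (Ec \<mu> \<kappa> / Zc \<mu> \<kappa>)"
    using Zc_pos[of \<mu> \<kappa>] by (intro divide_ennreal) (auto simp: Ec_def)
  also have "Ec \<mu> \<kappa> / Zc \<mu> \<kappa> = exp (- \<mu>) + (if \<kappa> = \<infinity> then 0 else exp (- real_of_ereal \<kappa>))"
  proof (cases "\<kappa> = \<infinity>")
    case True then show ?thesis by (simp add: Ec_def Zc_def)
  next
    case False
    let ?k = "real_of_ereal \<kappa>"
    have "Ec \<mu> \<kappa> / Zc \<mu> \<kappa> = exp (- \<mu>) * (1 + exp (\<mu> - ?k))"
      using False by (simp add: Ec_def Zc_def)
    also have "\<dots> = exp (- \<mu>) + exp (- \<mu>) * exp (\<mu> - ?k)" by (simp add: algebra_simps)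
    also have "exp (- \<mu>) * exp (\<mu> - ?k) = exp (- ?k)" by (simp add: mult_exp_exp)
    finally show ?thesis using False by simp
  qed
  finally show ?thesis by auto
qed

definition HS :: "(nat \<Rightarrow> real) measure" where "HS = PiM UNIV (\<lambda>_. borel)"
definition trn :: "nat \<Rightarrow> (nat \<Rightarrow> real) \<Rightarrow> (nat \<Rightarrow> real)" where
  "trn n x = (\<lambda>k. if 1 \<le> k \<and> k < n then x k else 0)"
definition lof :: "real \<Rightarrow> nat \<Rightarrow> (nat \<Rightarrow> real) \<Rightarrow> real" where
  "lof xs n x = Max ({0} \<union> {x k | k. 1 \<le> k \<and> k < n \<and> x k \<le> xs})"
definition hif :: "real \<Rightarrow> nat \<Rightarrow> (nat \<Rightarrow> real) \<Rightarrow> real" where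
  "hif xs n x = Min ({1} \<union> {x k | k. 1 \<le> k \<and> k < n \<and> x k \<ge> xs})"

lemma AS_lo_eq: "AS_lo X xs n \<omega> = lof xs n (\<lambda>k. X k \<omega>)" by (simp add: AS_lo_def lof_def)
lemma AS_hi_eq: "AS_hi X xs n \<omega> = hif xs n (\<lambda>k. X k \<omega>)" by (simp add: AS_hi_def hif_def)

lemma lof_trn: "n \<le> m \<Longrightarrow> lof xs n (trn m x) = lof xs n x"
proof -
  assume "n \<le> m"
  then have "{trn m x k | k. 1 \<le> k \<and> k < n \<and> trn m x k \<le> xs} = {x k | k. 1 \<le> k \<and> k < n \<and> x k \<le> xs}"
    unfolding trn_def by force
  then show ?thesis unfolding lof_def by simp
qed

lemma hif_trn: "n \<le> m \<Longrightarrow> hif xs n (trn m x) = hif xs n x"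
proof -
  assume "n \<le> m"
  then have "{trn m x k | k. 1 \<le> k \<and> k < n \<and> trn m x k \<ge> xs} = {x k | k. 1 \<le> k \<and> k < n \<and> x k \<ge> xs}"
    unfolding trn_def by force
  then show ?thesis unfolding hif_def by simp
qed

lemma fin_set: fixes x :: "nat \<Rightarrow> real" shows "finite {x k | k. 1 \<le> k \<and> k < n \<and> P (x k)}"
proof -
  have "{x k | k. 1 \<le> k \<and> k < n \<and> P (x k)} \<subseteq> x ` {..<n}" by auto
  then show ?thesis by (rule finite_subset) simp
qed

lemma HS_comp[measurable]: "(\<lambda>x. x n) \<in> borel_measurable HS"
  unfolding HS_def by measurable

lemma lof_Suc: "lof xs (Suc n) x = (if 1 \<le> n \<and> x n \<le> xs then max (x n) (lof xs n x) else lof xs n x)"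
proof -
  have eq: "{x k | k. 1 \<le> k \<and> k < Suc n \<and> x k \<le> xs} = {x k | k. 1 \<le> k \<and> k < n \<and> x k \<le> xs} \<union> (if 1 \<le> n \<and> x n \<le> xs then {x n} else {})"
    by (auto simp: less_Suc_eq)
  show ?thesis
  proof (cases "1 \<le> n \<and> x n \<le> xs")
    case True
    have "{0} \<union> {x k | k. 1 \<le> k \<and> k < Suc n \<and> x k \<le> xs} = insert (x n) ({0} \<union> {x k | k. 1 \<le> k \<and> k < n \<and> x k \<le> xs})"
      using True eq by auto
    then show ?thesis using True fin_set[of x n "\<lambda>v. v \<le> xs"] unfolding lof_def by (simp add: Max_insert)
  next
    case False
    have e2: "{x k | k. 1 \<le> k \<and> k < Suc n \<and> x k \<le> xs} = {x k | k. 1 \<le> k \<and> k < n \<and> x k \<le> xs}"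
      unfolding eq if_not_P[OF False] by simp
    show ?thesis unfolding lof_def e2 if_not_P[OF False] by simp
  qed
qed

lemma hif_Suc: "hif xs (Suc n) x = (if 1 \<le> n \<and> x n \<ge> xs then min (x n) (hif xs n x) else hif xs n x)"
proof -
  have eq: "{x k | k. 1 \<le> k \<and> k < Suc n \<and> x k \<ge> xs} = {x k | k. 1 \<le> k \<and> k < n \<and> x k \<ge> xs} \<union> (if 1 \<le> n \<and> x n \<ge> xs then {x n} else {})"
    by (auto simp: less_Suc_eq)
  show ?thesis
  proof (cases "1 \<le> n \<and> x n \<ge> xs")
    case True
    have "{1} \<union> {x k | k. 1 \<le> k \<and> k < Suc n \<and> x k \<ge> xs} = insert (x n) ({1} \<union> {x k | k. 1 \<le> k \<and> k < n \<and> x k \<ge> xs})"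
      using True eq by auto
    moreover have "Min (insert (x n) ({1} \<union> {x k | k. 1 \<le> k \<and> k < n \<and> x k \<ge> xs})) = min (x n) (Min ({1} \<union> {x k | k. 1 \<le> k \<and> k < n \<and> x k \<ge> xs}))"
      using fin_set[of x n "\<lambda>v. v \<ge> xs"] by (intro Min_insert) auto
    ultimately show ?thesis using True unfolding hif_def by simp
  next
    case False
    have e2: "{x k | k. 1 \<le> k \<and> k < Suc n \<and> x k \<ge> xs} = {x k | k. 1 \<le> k \<and> k < n \<and> x k \<ge> xs}"
      unfolding eq if_not_P[OF False] by simp
    show ?thesis unfolding hif_def e2 if_not_P[OF False] by simp
  qed
qed

lemma lof_0: "lof xs 0 x = 0" by (simp add: lof_def)
lemma hif_0: "hif xs 0 x = 1" by (simp add: hif_def)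

lemma lof_meas[measurable]: "lof xs n \<in> borel_measurable HS"
proof (induction n)
  case 0 then show ?case by (simp add: lof_0)
next
  case (Suc n)
  note [measurable] = Suc
  show ?case unfolding lof_Suc by measurable
qed

lemma hif_meas[measurable]: "hif xs n \<in> borel_measurable HS"
proof (induction n)
  case 0 then show ?case by (simp add: hif_0)
next
  case (Suc n)
  note [measurable] = Suc
  show ?case unfolding hif_Suc by measurable
qed

lemma lof_bounds: assumes "0 \<le> xs" shows "0 \<le> lof xs n x" "lof xs n x \<le> xs"
proof -
  have f: "finite ({0} \<union> {x k | k. 1 \<le> k \<and> k < n \<and> x k \<le> xs})" using fin_set[of x n "\<lambda>v. v \<le> xs"] by simp
  show "0 \<le> lof xs n x" unfolding lof_def using f by (intro Max_ge) auto
  show "lof xs n x \<le> xs" unfolding lof_def using f assms by (subst Max_le_iff) auto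
qed

lemma hif_bounds: assumes "xs \<le> 1" shows "hif xs n x \<le> 1" "xs \<le> hif xs n x"
proof -
  have f: "finite ({1} \<union> {x k | k. 1 \<le> k \<and> k < n \<and> x k \<ge> xs})" using fin_set[of x n "\<lambda>v. v \<ge> xs"] by simp
  show "hif xs n x \<le> 1" unfolding hif_def using f by (intro Min_le) auto
  show "xs \<le> hif xs n x" unfolding hif_def using f assms by (subst Min_ge_iff) auto
qed

lemma P_unif_sets[measurable_cong]: "sets P_unif = sets borel"
  by (simp add: P_unif_def)

lemma P_unif_space: "space P_unif = UNIV"
  by (simp add: P_unif_def)

lemma P_unif_Icc:
  assumes "0 \<le> a" "a \<le> b" "b \<le> 1"
  shows "emeasure P_unif {a..b} = ennreal (b - a)" "measure P_unif {a..b} = b - a"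
proof -
  have "{0..1::real} \<inter> {a..b} = {a..b}" using assms by auto
  then show e: "emeasure P_unif {a..b} = ennreal (b - a)"
    unfolding P_unif_def using assms by (simp add: emeasure_uniform_measure divide_ennreal_def)
  then show "measure P_unif {a..b} = b - a" unfolding measure_def using assms by simp
qed

lemma nn_int_P_unif:
  assumes [measurable]: "g \<in> borel_measurable borel"
  shows "(\<integral>\<^sup>+ y. g y \<partial>P_unif) = (\<integral>\<^sup>+ y. g y * indicator {0..1} y \<partial>lborel)"
  unfolding P_unif_def by (subst nn_integral_uniform_measure) (auto simp: divide_ennreal_def)

lemma nn_int_Unif:
  assumes [measurable]: "g \<in> borel_measurable borel" and ab: "0 \<le> a" "a \<le> b" "b \<le> 1"
  shows "(\<integral>\<^sup>+ y. g y \<partial>uniform_measure P_unif {a..b}) = (\<integral>\<^sup>+ y. g y * indicator {a..b} y * indicator {0..1} y \<partial>lborel) / ennreal (b - a)"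
proof -
  have "(\<integral>\<^sup>+ y. g y \<partial>uniform_measure P_unif {a..b}) = (\<integral>\<^sup>+ y. g y * indicator {a..b} y \<partial>P_unif) / emeasure P_unif {a..b}"
    using assms by (intro nn_integral_uniform_measure) (simp_all add: measurable_cong_sets[OF P_unif_sets refl])
  also have "(\<integral>\<^sup>+ y. g y * indicator {a..b} y \<partial>P_unif) = (\<integral>\<^sup>+ y. g y * indicator {a..b} y * indicator {0..1} y \<partial>lborel)"
    by (rule nn_int_P_unif) measurable
  finally show ?thesis using P_unif_Icc[OF ab] by simp
qed

lemma Unif_meas:
  fixes D :: "'d measure"
  assumes a[measurable]: "a \<in> borel_measurable D" and b[measurable]: "b \<in> borel_measurable D"
    and ab: "\<And>x. x \<in> space D \<Longrightarrow> 0 \<le> a x \<and> a x \<le> b x \<and> b x \<le> 1"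
    and Phi[measurable]: "\<Phi> \<in> borel_measurable (D \<Otimes>\<^sub>M borel)"
  shows "(\<lambda>x. \<integral>\<^sup>+ y. \<Phi> (x, y) \<partial>uniform_measure P_unif {a x..b x}) \<in> borel_measurable D"
proof -
  have m1: "(\<lambda>x. \<integral>\<^sup>+ y. \<Phi> (x, y) * indicator {a x..b x} y * indicator {0..1} y \<partial>lborel) \<in> borel_measurable D"
  proof (rule lborel.borel_measurable_nn_integral)
    have "(\<lambda>z. \<Phi> z * (if a (fst z) \<le> snd z \<and> snd z \<le> b (fst z) then 1 else 0) * (if 0 \<le> snd z \<and> snd z \<le> 1 then 1 else 0)) \<in> borel_measurable (D \<Otimes>\<^sub>M borel)"
      by measurable
    moreover have "(\<lambda>z. \<Phi> z * (if a (fst z) \<le> snd z \<and> snd z \<le> b (fst z) then 1 else 0) * (if 0 \<le> snd z \<and> snd z \<le> 1 then 1 else 0)) = (\<lambda>(x, y). \<Phi> (x, y) * indicator {a x..b x} y * indicator {0..1} y)"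
      by (auto simp: indicator_def fun_eq_iff)
    ultimately show "(\<lambda>(x, y). \<Phi> (x, y) * indicator {a x..b x} y * indicator {0..1} y) \<in> borel_measurable (D \<Otimes>\<^sub>M lborel)"
      by (simp add: split_beta' cong: measurable_cong_sets)
  qed
  have "(\<lambda>x. (\<integral>\<^sup>+ y. \<Phi> (x, y) * indicator {a x..b x} y * indicator {0..1} y \<partial>lborel) / ennreal (b x - a x)) \<in> borel_measurable D"
    using m1 by measurable
  moreover have "\<And>x. x \<in> space D \<Longrightarrow> (\<integral>\<^sup>+ y. \<Phi> (x, y) \<partial>uniform_measure P_unif {a x..b x}) = (\<integral>\<^sup>+ y. \<Phi> (x, y) * indicator {a x..b x} y * indicator {0..1} y \<partial>lborel) / ennreal (b x - a x)"
    using ab by (intro nn_int_Unif) (auto intro: measurable_compose_Pair1[OF _ Phi])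
  ultimately show ?thesis by (metis (no_types, lifting) measurable_cong)
qed

lemma Unif_bound:
  assumes "S \<in> sets borel"
  shows "emeasure (uniform_measure P_unif S) UNIV \<le> 1"
proof -
  have "emeasure (uniform_measure P_unif S) UNIV = emeasure P_unif (S \<inter> UNIV) / emeasure P_unif S"
    using assms by (subst emeasure_uniform_measure) (auto simp: P_unif_space[symmetric])
  also have "\<dots> \<le> 1"
  proof (cases "emeasure P_unif S = 0")
    case True then show ?thesis by simp
  next
    case False
    have "emeasure P_unif S = emeasure lborel ({0..1} \<inter> S)" unfolding P_unif_def
      using assms by (simp add: divide_ennreal_def)
    also have "\<dots> \<le> emeasure lborel {0..1::real}" by (rule emeasure_mono) auto
    also have "\<dots> = 1" by simp
    finally have le: "emeasure P_unif S \<le> 1" .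
    have "emeasure P_unif S < top" using le_less_trans[OF le] by simp
    then show ?thesis using False by simp
  qed
  finally show ?thesis .
qed

lemma gen_sigma_space[simp]: "space (gen_sigma M fs) = space M"
  unfolding gen_sigma_def by (rule space_measure_of) auto

lemma gen_sigma_sets: "sets (gen_sigma M fs) = sigma_sets (space M) (\<Union>f\<in>fs. {f -` A \<inter> space M | A. A \<in> sets borel})"
  unfolding gen_sigma_def by (rule sets_measure_of) auto

lemma gen_sigma_meas: assumes "f \<in> fs" shows "f \<in> borel_measurable (gen_sigma M fs)"
proof (rule measurableI)
  fix A :: "real set" assume "A \<in> sets borel"
  then have "f -` A \<inter> space M \<in> (\<Union>f\<in>fs. {f -` A \<inter> space M | A. A \<in> sets borel})" using assms by auto
  then show "f -` A \<inter> space (gen_sigma M fs) \<in> sets (gen_sigma M fs)"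
    unfolding gen_sigma_sets by auto
qed auto

lemma gen_sigma_sub:
  assumes "\<And>f. f \<in> fs \<Longrightarrow> f \<in> borel_measurable M"
  shows "subalgebra M (gen_sigma M fs)"
  unfolding subalgebra_def
proof
  show "space (gen_sigma M fs) = space M" by simp
  have "(\<Union>f\<in>fs. {f -` A \<inter> space M | A. A \<in> sets borel}) \<subseteq> sets M"
    using assms measurable_sets by blast
  then show "sets (gen_sigma M fs) \<subseteq> sets M" unfolding gen_sigma_sets
    by (rule sets.sigma_sets_subset)
qed

lemma gen_sigma_sf:
  assumes "prob_space M" "\<And>f. f \<in> fs \<Longrightarrow> f \<in> borel_measurable M"
  shows "sigma_finite_subalgebra M (gen_sigma M fs)"
proof (rule finite_measure_subalgebra_is_sigma_finite)
  interpret prob_space M by (rule assms(1))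
  show "finite_measure_subalgebra M (gen_sigma M fs)"
    unfolding finite_measure_subalgebra_def finite_measure_subalgebra_axioms_def
    using gen_sigma_sub[OF assms(2)] finite_measure_axioms by auto
qed

lemma prod_int:
  fixes T U :: "real measure"
  assumes sT: "sets T = sets borel" and sU: "sets U = sets borel" and fU: "finite_measure U"
    and f[measurable]: "f \<in> borel_measurable borel" and k[measurable]: "k \<in> borel_measurable borel"
  shows "(\<integral>\<^sup>+ z. f (fst z) * k (snd z) \<partial>(T \<Otimes>\<^sub>M U)) = (\<integral>\<^sup>+ x. f x \<partial>T) * (\<integral>\<^sup>+ y. k y \<partial>U)"
proof -
  interpret U: finite_measure U by (rule fU)
  have fT: "f \<in> borel_measurable T" using f sT by (simp cong: measurable_cong_sets)
  have kU: "k \<in> borel_measurable U" using k sU by (simp cong: measurable_cong_sets)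
  have m: "(\<lambda>z. f (fst z) * k (snd z)) \<in> borel_measurable (T \<Otimes>\<^sub>M U)"
    using fT kU by measurable
  have "(\<integral>\<^sup>+ z. f (fst z) * k (snd z) \<partial>(T \<Otimes>\<^sub>M U)) = (\<integral>\<^sup>+ x. \<integral>\<^sup>+ y. f (fst (x,y)) * k (snd (x,y)) \<partial>U \<partial>T)"
    using U.nn_integral_fst[OF m] by simp
  also have "\<dots> = (\<integral>\<^sup>+ x. f x * (\<integral>\<^sup>+ y. k y \<partial>U) \<partial>T)"
    using kU by (simp add: nn_integral_cmult)
  also have "\<dots> = (\<integral>\<^sup>+ x. f x \<partial>T) * (\<integral>\<^sup>+ y. k y \<partial>U)"
    using fT by (rule nn_integral_multc)
  finally show ?thesis .
qed

lemma Unif_finite: "S \<in> sets borel \<Longrightarrow> finite_measure (uniform_measure P_unif S)"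
  by (rule finite_measureI) (use Unif_bound[of S] in \<open>auto simp: P_unif_space top_unique\<close>)

locale ASL =
  fixes M :: "'a measure" and xs :: real and G X :: "nat \<Rightarrow> 'a \<Rightarrow> real"
  assumes pM: "prob_space M" and xs0: "0 \<le> xs" and xs1: "xs \<le> 1"
    and AS: "is_AS_star M xs G X"
begin

definition Fn where "Fn n = AS_past M G X n"
definition Hist where "Hist \<omega> = (\<lambda>k. X k \<omega>)"
definition Wn where "Wn n \<omega> = trn n (Hist \<omega>)"
definition lam where "lam n \<omega> = measure P_unif (AS_B X xs n \<omega>)"
definition Uf where "Uf n x = uniform_measure P_unif {lof xs n x..hif xs n x}"
definition eps where "eps n \<omega> = (if n \<le> 1 then 0 else ennreal (exp (- G (n - 1) \<omega>)))"
definition cc where "cc n \<omega> = ennreal (1 / lam n \<omega>) + eps n \<omega>"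

lemma GX_meas: "1 \<le> k \<Longrightarrow> G k \<in> borel_measurable M" "1 \<le> k \<Longrightarrow> X k \<in> borel_measurable M"
  using AS unfolding is_AS_star_def by auto

lemma Fn_gens: "f \<in> {G k | k. 1 \<le> k \<and> k < n} \<union> {X k | k. 1 \<le> k \<and> k < n} \<Longrightarrow> f \<in> borel_measurable M"
  using GX_meas by auto

lemma Fn_sf: "sigma_finite_subalgebra M (Fn n)"
  unfolding Fn_def AS_past_def by (rule gen_sigma_sf[OF pM Fn_gens])

lemma Fn_sub: "subalgebra M (Fn n)"
  unfolding Fn_def AS_past_def by (rule gen_sigma_sub[OF Fn_gens])

lemma Fn_space[simp]: "space (Fn n) = space M"
  unfolding Fn_def AS_past_def by simp

lemma X_Fn: "1 \<le> k \<Longrightarrow> k < n \<Longrightarrow> X k \<in> borel_measurable (Fn n)"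
  unfolding Fn_def AS_past_def by (rule gen_sigma_meas) auto

lemma G_Fn: "1 \<le> k \<Longrightarrow> k < n \<Longrightarrow> G k \<in> borel_measurable (Fn n)"
  unfolding Fn_def AS_past_def by (rule gen_sigma_meas) auto

lemma Wn_meas: "Wn n \<in> measurable (Fn n) HS"
  unfolding Wn_def trn_def Hist_def HS_def
proof (rule measurable_PiM_single')
  fix k :: nat
  show "(\<lambda>\<omega>. if 1 \<le> k \<and> k < n then X k \<omega> else 0) \<in> borel_measurable (Fn n)"
    using X_Fn[of k n] by (cases "1 \<le> k \<and> k < n") auto
qed (auto simp: space_PiM)

lemma Wn_measM: "Wn n \<in> measurable M HS"
  using measurable_from_subalg[OF Fn_sub Wn_meas] .

lemma AS_B_eq: "AS_B X xs n \<omega> = {lof xs n (Wn n \<omega>)..hif xs n (Wn n \<omega>)}"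
  unfolding AS_B_def AS_lo_eq AS_hi_eq Wn_def Hist_def by (simp add: lof_trn hif_trn)

lemma lam_eq: "lam n \<omega> = hif xs n (Wn n \<omega>) - lof xs n (Wn n \<omega>)"
  unfolding lam_def AS_B_eq
  by (rule P_unif_Icc(2)) (use lof_bounds[OF xs0] hif_bounds[OF xs1] in \<open>auto intro: order_trans[OF lof_bounds(2)[OF xs0] hif_bounds(2)[OF xs1]]\<close>)

lemma lam_nonneg: "0 \<le> lam n \<omega>"
  unfolding lam_eq using lof_bounds(2)[OF xs0] hif_bounds(2)[OF xs1] by (smt (verit))

lemma lam_Fn[measurable]: "lam n \<in> borel_measurable (Fn n)"
proof -
  have "(\<lambda>\<omega>. hif xs n (Wn n \<omega>) - lof xs n (Wn n \<omega>)) \<in> borel_measurable (Fn n)"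
    using measurable_compose[OF Wn_meas hif_meas] measurable_compose[OF Wn_meas lof_meas] by measurable
  then show ?thesis unfolding lam_eq[abs_def] .
qed

lemma U_eq: "uniform_measure P_unif (AS_B X xs n \<omega>) = Uf n (Wn n \<omega>)"
  unfolding AS_B_eq Uf_def ..

lemma eps_Fn[measurable]: "eps n \<in> borel_measurable (Fn n)"
proof (cases "n \<le> 1")
  case True then show ?thesis unfolding eps_def by simp
next
  case False
  then have [measurable]: "G (n - 1) \<in> borel_measurable (Fn n)" by (intro G_Fn) auto
  show ?thesis unfolding eps_def by measurable
qed

lemma cc_Fn[measurable]: "cc n \<in> borel_measurable (Fn n)"
  unfolding cc_def by measurable

lemma prevG_ne: "AS_prevG G n \<omega> \<noteq> - \<infinity>"
  unfolding AS_prevG_def by simp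

end

context ASL begin

lemma cond_prod:
  fixes f k :: "real \<Rightarrow> ennreal"
  assumes n: "1 \<le> n" and f[measurable]: "f \<in> borel_measurable borel" and k[measurable]: "k \<in> borel_measurable borel"
  shows "AE \<omega> in M. nn_cond_exp M (Fn n) (\<lambda>\<omega>. f (G n \<omega>) * k (X n \<omega>)) \<omega>
     = (\<integral>\<^sup>+ g. f g \<partial>TG (ln (lam n \<omega>)) (AS_prevG G n \<omega>)) * (\<integral>\<^sup>+ y. k y \<partial>Uf n (Wn n \<omega>))"
proof -
  define h where "h z = f (fst z) * k (snd z)" for z :: "real \<times> real"
  have hm: "h \<in> borel_measurable (borel :: (real \<times> real) measure)" unfolding h_def borel_prod[symmetric] by measurable
  have "AE \<omega> in M. nn_cond_exp M (AS_past M G X n) (\<lambda>\<omega>'. h (G n \<omega>', X n \<omega>')) \<omega>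
          = (\<integral>\<^sup>+ z. h z \<partial>(TG (ln (measure P_unif (AS_B X xs n \<omega>))) (AS_prevG G n \<omega>)
                         \<Otimes>\<^sub>M uniform_measure P_unif (AS_B X xs n \<omega>)))"
    using AS n hm unfolding is_AS_star_def by blast
  then show ?thesis
  proof (rule AE_mp, intro AE_I2 impI)
    fix \<omega> assume e: "nn_cond_exp M (AS_past M G X n) (\<lambda>\<omega>'. h (G n \<omega>', X n \<omega>')) \<omega>
          = (\<integral>\<^sup>+ z. h z \<partial>(TG (ln (measure P_unif (AS_B X xs n \<omega>))) (AS_prevG G n \<omega>)
                         \<Otimes>\<^sub>M uniform_measure P_unif (AS_B X xs n \<omega>)))"
    have B: "AS_B X xs n \<omega> \<in> sets borel" unfolding AS_B_def by simp
    have "(\<integral>\<^sup>+ z. h z \<partial>(TG (ln (measure P_unif (AS_B X xs n \<omega>))) (AS_prevG G n \<omega>)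
                         \<Otimes>\<^sub>M uniform_measure P_unif (AS_B X xs n \<omega>)))
       = (\<integral>\<^sup>+ g. f g \<partial>TG (ln (lam n \<omega>)) (AS_prevG G n \<omega>)) * (\<integral>\<^sup>+ y. k y \<partial>uniform_measure P_unif (AS_B X xs n \<omega>))"
      unfolding h_def lam_def
      by (rule prod_int[OF TG_sets _ Unif_finite[OF B] f k]) (simp add: P_unif_sets)
    with e show "nn_cond_exp M (Fn n) (\<lambda>\<omega>. f (G n \<omega>) * k (X n \<omega>)) \<omega>
     = (\<integral>\<^sup>+ g. f g \<partial>TG (ln (lam n \<omega>)) (AS_prevG G n \<omega>)) * (\<integral>\<^sup>+ y. k y \<partial>Uf n (Wn n \<omega>))"
      unfolding Fn_def h_def U_eq by simp
  qed
qed

lemma TG_one: "(\<integral>\<^sup>+ g. 1 \<partial>TG \<mu> (AS_prevG G n \<omega>)) = 1"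
proof -
  interpret prob_space "TG \<mu> (AS_prevG G n \<omega>)" by (rule TG_prob[OF prevG_ne])
  show ?thesis by (simp add: emeasure_space_1)
qed

lemma U_one: assumes n: "1 \<le> n" shows "AE \<omega> in M. emeasure (Uf n (Wn n \<omega>)) UNIV = 1"
proof -
  interpret sigma_finite_subalgebra M "Fn n" by (rule Fn_sf)
  have c1: "AE \<omega> in M. (\<lambda>_. 1) \<omega> = nn_cond_exp M (Fn n) (\<lambda>_. 1) \<omega>"
    by (rule nn_cond_exp_F_meas) simp
  have c2: "AE \<omega> in M. nn_cond_exp M (Fn n) (\<lambda>\<omega>. (\<lambda>_. 1) (G n \<omega>) * (\<lambda>_. 1) (X n \<omega>)) \<omega>
     = (\<integral>\<^sup>+ g. 1 \<partial>TG (ln (lam n \<omega>)) (AS_prevG G n \<omega>)) * (\<integral>\<^sup>+ y. 1 \<partial>Uf n (Wn n \<omega>))"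
    by (rule cond_prod[OF n]) auto
  show ?thesis using c1 c2
  proof (eventually_elim)
    case (elim \<omega>)
    have sp: "space (Uf n (Wn n \<omega>)) = UNIV" unfolding Uf_def by (simp add: P_unif_space)
    from elim show ?case by (simp add: prob_space.emeasure_space_1[OF TG_prob[OF prevG_ne]] sp)
  qed
qed

lemma lam_pos: assumes n: "1 \<le> n" shows "AE \<omega> in M. 0 < lam n \<omega>"
  using U_one[OF n]
proof (eventually_elim)
  case (elim \<omega>)
  show ?case
  proof (rule ccontr)
    assume "\<not> 0 < lam n \<omega>"
    then have l0: "lam n \<omega> = 0" using lam_nonneg[of n \<omega>] by simp
    let ?a = "lof xs n (Wn n \<omega>)" and ?b = "hif xs n (Wn n \<omega>)"
    have ab: "0 \<le> ?a" "?a \<le> ?b" "?b \<le> 1"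
      using lof_bounds[OF xs0] hif_bounds[OF xs1] order_trans[OF lof_bounds(2)[OF xs0] hif_bounds(2)[OF xs1]] by auto
    have "emeasure P_unif {?a..?b} = 0" using P_unif_Icc(1)[OF ab] l0 lam_eq[of n \<omega>] by simp
    then have "emeasure (Uf n (Wn n \<omega>)) UNIV = 0" unfolding Uf_def
      by (subst emeasure_uniform_measure) (auto simp: P_unif_space[symmetric])
    then show False using elim by simp
  qed
qed

lemma TG_E: assumes "0 < lam n \<omega>"
  shows "(\<integral>\<^sup>+ g. ennreal (exp (- g)) \<partial>TG (ln (lam n \<omega>)) (AS_prevG G n \<omega>)) = cc n \<omega>"
  apply (subst TG_exp[OF prevG_ne])
  unfolding cc_def eps_def AS_prevG_def
  using assms by (simp add: exp_minus inverse_eq_divide)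

lemma condE: assumes n: "1 \<le> n"
  shows "AE \<omega> in M. nn_cond_exp M (Fn n) (\<lambda>\<omega>. ennreal (exp (- G n \<omega>))) \<omega> = cc n \<omega>"
proof -
  have c2: "AE \<omega> in M. nn_cond_exp M (Fn n) (\<lambda>\<omega>. (\<lambda>g. ennreal (exp (- g))) (G n \<omega>) * (\<lambda>_. 1) (X n \<omega>)) \<omega>
     = (\<integral>\<^sup>+ g. ennreal (exp (- g)) \<partial>TG (ln (lam n \<omega>)) (AS_prevG G n \<omega>)) * (\<integral>\<^sup>+ y. 1 \<partial>Uf n (Wn n \<omega>))"
    by (rule cond_prod[OF n]) auto
  show ?thesis using c2 U_one[OF n] lam_pos[OF n]
  proof (eventually_elim)
    case (elim \<omega>)
    have sp: "space (Uf n (Wn n \<omega>)) = UNIV" unfolding Uf_def by (simp add: P_unif_space)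
    from elim show ?case by (simp add: TG_E sp)
  qed
qed

lemma condES: assumes n: "1 \<le> n" and S: "S \<in> sets borel"
  shows "AE \<omega> in M. nn_cond_exp M (Fn n) (\<lambda>\<omega>. ennreal (exp (- G n \<omega>)) * indicator S (X n \<omega>)) \<omega> = cc n \<omega> * emeasure (Uf n (Wn n \<omega>)) S"
proof -
  have c2: "AE \<omega> in M. nn_cond_exp M (Fn n) (\<lambda>\<omega>. (\<lambda>g. ennreal (exp (- g))) (G n \<omega>) * indicator S (X n \<omega>)) \<omega>
     = (\<integral>\<^sup>+ g. ennreal (exp (- g)) \<partial>TG (ln (lam n \<omega>)) (AS_prevG G n \<omega>)) * (\<integral>\<^sup>+ y. indicator S y \<partial>Uf n (Wn n \<omega>))"
    by (rule cond_prod[OF n]) (auto intro: borel_measurable_indicator S)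
  show ?thesis using c2 lam_pos[OF n]
  proof (eventually_elim)
    case (elim \<omega>)
    have S': "S \<in> sets (Uf n (Wn n \<omega>))" unfolding Uf_def using S by (simp add: P_unif_sets)
    from elim show ?case using S' by (simp add: TG_E)
  qed
qed

lemma condS: assumes n: "1 \<le> n" and S: "S \<in> sets borel"
  shows "AE \<omega> in M. nn_cond_exp M (Fn n) (\<lambda>\<omega>. 1 * indicator S (X n \<omega>)) \<omega> = 1 * emeasure (Uf n (Wn n \<omega>)) S"
proof -
  have c2: "AE \<omega> in M. nn_cond_exp M (Fn n) (\<lambda>\<omega>. (\<lambda>_. 1) (G n \<omega>) * indicator S (X n \<omega>)) \<omega>
     = (\<integral>\<^sup>+ g. 1 \<partial>TG (ln (lam n \<omega>)) (AS_prevG G n \<omega>)) * (\<integral>\<^sup>+ y. indicator S y \<partial>Uf n (Wn n \<omega>))"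
    by (rule cond_prod[OF n]) (auto intro: borel_measurable_indicator S)
  show ?thesis using c2
  proof (eventually_elim)
    case (elim \<omega>)
    have S': "S \<in> sets (Uf n (Wn n \<omega>))" unfolding Uf_def using S by (simp add: P_unif_sets)
    from elim show ?case using S' by (simp add: prob_space.emeasure_space_1[OF TG_prob[OF prevG_ne]])
  qed
qed

end

lemma trn_meas[measurable]: "trn n \<in> measurable HS HS"
  unfolding trn_def HS_def
proof (rule measurable_PiM_single')
  fix k :: nat
  show "(\<lambda>x. if 1 \<le> k \<and> k < n then x k else 0) \<in> borel_measurable (Pi\<^sub>M UNIV (\<lambda>_. borel))"
    by (cases "1 \<le> k \<and> k < n") auto
qed (auto simp: space_PiM)

lemma upd_meas[measurable]: "(\<lambda>z. (fst z)(N := snd z)) \<in> measurable (HS \<Otimes>\<^sub>M borel) HS"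
proof -
  have "(\<lambda>(f, y). f(N := y)) \<in> measurable (Pi\<^sub>M UNIV (\<lambda>_. borel) \<Otimes>\<^sub>M (\<lambda>_. borel) N) (Pi\<^sub>M (insert N UNIV) (\<lambda>_. borel :: real measure))"
    by (rule measurable_add_dim)
  then show ?thesis unfolding HS_def by (simp add: split_beta')
qed

definition sfun :: "real \<Rightarrow> nat \<Rightarrow> (nat \<Rightarrow> real) \<Rightarrow> ennreal" where
  "sfun xs N x = ennreal (\<Sum>n=1..N. 1 / (hif xs n x - lof xs n x))"

lemma sfun_meas[measurable]: "sfun xs N \<in> borel_measurable HS"
  unfolding sfun_def by measurable

context ASL begin

definition E where "E n \<omega> = ennreal (exp (- G n \<omega>))"
definition Sn where "Sn N \<omega> = ennreal (\<Sum>n=1..N. 1 / lam n \<omega>)"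

lemma E_meas[measurable]: "1 \<le> n \<Longrightarrow> E n \<in> borel_measurable M"
  unfolding E_def using GX_meas(1) by measurable

lemma E_Fn: "1 \<le> n \<Longrightarrow> n < m \<Longrightarrow> E n \<in> borel_measurable (Fn m)"
  unfolding E_def using G_Fn by measurable

lemma Sn_eq: "N \<le> m \<Longrightarrow> Sn N \<omega> = sfun xs N (Wn m \<omega>)"
  unfolding Sn_def sfun_def lam_eq Wn_def by (auto intro!: arg_cong[where f=ennreal] sum.cong simp: lof_trn hif_trn)

lemma Sn_Fn: "N \<le> m \<Longrightarrow> Sn N \<in> borel_measurable (Fn m)"
proof -
  assume "N \<le> m"
  then have "Sn N = (\<lambda>\<omega>. sfun xs N (Wn m \<omega>))" using Sn_eq by auto
  then show ?thesis using measurable_compose[OF Wn_meas sfun_meas] by simp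
qed

lemma Fn_M: "f \<in> borel_measurable (Fn n) \<Longrightarrow> f \<in> borel_measurable M"
  using measurable_from_subalg[OF Fn_sub] .

lemma stepI:
  assumes n: "1 \<le> n" and Z: "Z \<in> borel_measurable (Fn n)"
  shows "(\<integral>\<^sup>+\<omega>. Z \<omega> * E n \<omega> \<partial>M) = (\<integral>\<^sup>+\<omega>. Z \<omega> * cc n \<omega> \<partial>M)"
proof -
  interpret sigma_finite_subalgebra M "Fn n" by (rule Fn_sf)
  have "(\<integral>\<^sup>+\<omega>. Z \<omega> * E n \<omega> \<partial>M) = (\<integral>\<^sup>+\<omega>. Z \<omega> * nn_cond_exp M (Fn n) (E n) \<omega> \<partial>M)"
    using Z n by (intro nn_cond_exp_intg[symmetric]) auto
  also have "\<dots> = (\<integral>\<^sup>+\<omega>. Z \<omega> * cc n \<omega> \<partial>M)"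
  proof -
    have Ee: "E n = (\<lambda>\<omega>. ennreal (exp (- G n \<omega>)))" by (auto simp: E_def)
    show ?thesis using condE[OF n] unfolding Ee by (intro nn_integral_cong_AE) auto
  qed
  finally show ?thesis .
qed

lemma Wn_Suc: "trn (Suc N) ((Wn N \<omega>)(N := X N \<omega>)) = Wn (Suc N) \<omega>"
  unfolding Wn_def trn_def Hist_def by (auto simp: fun_eq_iff)

end

context ASL begin

lemma K_sets: "sets (Uf N x) = sets borel"
  unfolding Uf_def by (simp add: P_unif_sets)

lemma K_bound: "emeasure (Uf N x) UNIV \<le> 1"
  unfolding Uf_def by (rule Unif_bound) simp

lemma K_meas: "\<Phi> \<in> borel_measurable (HS \<Otimes>\<^sub>M borel) \<Longrightarrow> (\<lambda>x. \<integral>\<^sup>+ y. \<Phi> (x, y) \<partial>Uf N x) \<in> borel_measurable HS"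
  unfolding Uf_def
  by (rule Unif_meas[OF lof_meas hif_meas])
     (use lof_bounds[OF xs0] hif_bounds[OF xs1] order_trans[OF lof_bounds(2)[OF xs0] hif_bounds(2)[OF xs1]] in auto)

lemma cc_fin: "cc n \<omega> < \<infinity>"
  unfolding cc_def eps_def by (auto simp: infinity_ennreal_def)

lemma EXT1:
  assumes N: "1 \<le> N" and Phi: "\<Phi> \<in> borel_measurable (HS \<Otimes>\<^sub>M borel)"
  shows "(\<integral>\<^sup>+\<omega>. E N \<omega> * \<Phi> (Wn N \<omega>, X N \<omega>) \<partial>M) = (\<integral>\<^sup>+\<omega>. cc N \<omega> * (\<integral>\<^sup>+ y. \<Phi> (Wn N \<omega>, y) \<partial>Uf N (Wn N \<omega>)) \<partial>M)"
proof (rule EXT[OF Fn_sf pM Wn_meas GX_meas(2)[OF N] E_meas[OF N] cc_Fn cc_fin K_sets K_bound K_meas _ Phi])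
  fix S :: "real set" assume S: "S \<in> sets borel"
  show "AE \<omega> in M. nn_cond_exp M (Fn N) (\<lambda>\<omega>. E N \<omega> * indicator S (X N \<omega>)) \<omega> = cc N \<omega> * emeasure (Uf N (Wn N \<omega>)) S"
    using condES[OF N S] unfolding E_def .
qed

lemma EXT2:
  assumes N: "1 \<le> N" and Phi: "\<Phi> \<in> borel_measurable (HS \<Otimes>\<^sub>M borel)"
  shows "(\<integral>\<^sup>+\<omega>. 1 * \<Phi> (Wn N \<omega>, X N \<omega>) \<partial>M) = (\<integral>\<^sup>+\<omega>. 1 * (\<integral>\<^sup>+ y. \<Phi> (Wn N \<omega>, y) \<partial>Uf N (Wn N \<omega>)) \<partial>M)"
proof (rule EXT[where V = "\<lambda>_. 1" and c = "\<lambda>_. 1", OF Fn_sf pM Wn_meas GX_meas(2)[OF N] _ _ _ K_sets K_bound K_meas _ Phi])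
  fix S :: "real set" assume S: "S \<in> sets borel"
  show "AE \<omega> in M. nn_cond_exp M (Fn N) (\<lambda>\<omega>. 1 * indicator S (X N \<omega>)) \<omega> = 1 * emeasure (Uf N (Wn N \<omega>)) S"
    using condS[OF N S] .
qed auto

end

context ASL begin

lemma lam_M[measurable]: "lam n \<in> borel_measurable M"
  using Fn_M[OF lam_Fn] .

lemma Sn_M[measurable]: "Sn N \<in> borel_measurable M"
  using Fn_M[OF Sn_Fn[of N N]] by simp

lemma PsiW_Fn: "\<Psi> \<in> borel_measurable HS \<Longrightarrow> (\<lambda>\<omega>. \<Psi> (Wn n \<omega>)) \<in> borel_measurable (Fn n)"
  using measurable_compose[OF Wn_meas] by blast

lemma PsiW_M[measurable]: "\<Psi> \<in> borel_measurable HS \<Longrightarrow> (\<lambda>\<omega>. \<Psi> (Wn n \<omega>)) \<in> borel_measurable M"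
  using Fn_M[OF PsiW_Fn] .

lemma Sn_Suc: "Sn (Suc N) \<omega> = Sn N \<omega> + ennreal (1 / lam (Suc N) \<omega>)"
proof -
  have nn: "0 \<le> (\<Sum>n=1..N. 1 / lam n \<omega>)" using lam_nonneg by (intro sum_nonneg) auto
  have "(\<Sum>n=1..Suc N. 1 / lam n \<omega>) = (\<Sum>n=1..N. 1 / lam n \<omega>) + 1 / lam (Suc N) \<omega>"
    by (simp add: sum.cl_ivl_Suc)
  then show ?thesis unfolding Sn_def using nn lam_nonneg[of "Suc N" \<omega>] by (simp add: ennreal_plus)
qed

lemma cc_Suc: "1 \<le> N \<Longrightarrow> cc (Suc N) \<omega> = ennreal (1 / lam (Suc N) \<omega>) + E N \<omega>"
  unfolding cc_def eps_def E_def by simp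

lemma cc_1: "cc 1 \<omega> = Sn 1 \<omega>"
  unfolding cc_def eps_def Sn_def by simp

lemma mainC:
  assumes "1 \<le> N"
  shows "\<forall>\<Psi>\<in>borel_measurable HS. (\<integral>\<^sup>+\<omega>. E N \<omega> * \<Psi> (Wn N \<omega>) \<partial>M) = (\<integral>\<^sup>+\<omega>. Sn N \<omega> * \<Psi> (Wn N \<omega>) \<partial>M)"
  using assms
proof (induction N rule: nat_induct_at_least)
  case base
  show ?case
  proof
    fix \<Psi> :: "(nat \<Rightarrow> real) \<Rightarrow> ennreal" assume \<Psi>: "\<Psi> \<in> borel_measurable HS"
    have "(\<integral>\<^sup>+\<omega>. E 1 \<omega> * \<Psi> (Wn 1 \<omega>) \<partial>M) = (\<integral>\<^sup>+\<omega>. \<Psi> (Wn 1 \<omega>) * E 1 \<omega> \<partial>M)" by (simp add: mult.commute)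
    also have "\<dots> = (\<integral>\<^sup>+\<omega>. \<Psi> (Wn 1 \<omega>) * cc 1 \<omega> \<partial>M)" by (rule stepI) (auto intro: PsiW_Fn[OF \<Psi>])
    also have "\<dots> = (\<integral>\<^sup>+\<omega>. Sn 1 \<omega> * \<Psi> (Wn 1 \<omega>) \<partial>M)" unfolding cc_1 by (simp add: mult.commute)
    finally show "(\<integral>\<^sup>+\<omega>. E 1 \<omega> * \<Psi> (Wn 1 \<omega>) \<partial>M) = (\<integral>\<^sup>+\<omega>. Sn 1 \<omega> * \<Psi> (Wn 1 \<omega>) \<partial>M)" .
  qed
next
  case (Suc N)
  note N = Suc(1)
  show ?case
  proof
    fix \<Psi> :: "(nat \<Rightarrow> real) \<Rightarrow> ennreal" assume \<Psi>[measurable]: "\<Psi> \<in> borel_measurable HS"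
    define \<Phi> where "\<Phi> z = \<Psi> (trn (Suc N) ((fst z)(N := snd z)))" for z
    have \<Phi>m[measurable]: "\<Phi> \<in> borel_measurable (HS \<Otimes>\<^sub>M borel)" unfolding \<Phi>_def by measurable
    define \<Psi>' where "\<Psi>' x = (\<integral>\<^sup>+ y. \<Phi> (x, y) \<partial>Uf N x)" for x
    have \<Psi>'m[measurable]: "\<Psi>' \<in> borel_measurable HS" unfolding \<Psi>'_def by (rule K_meas[OF \<Phi>m])
    define \<Phi>2 where "\<Phi>2 z = sfun xs N (fst z) * \<Phi> z" for z
    have \<Phi>2m[measurable]: "\<Phi>2 \<in> borel_measurable (HS \<Otimes>\<^sub>M borel)" unfolding \<Phi>2_def by measurable
    have key: "\<Phi> (Wn N \<omega>, X N \<omega>) = \<Psi> (Wn (Suc N) \<omega>)" for \<omega>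
      unfolding \<Phi>_def by (simp add: Wn_Suc)
    have A: "(\<integral>\<^sup>+\<omega>. E N \<omega> * \<Psi> (Wn (Suc N) \<omega>) \<partial>M) = (\<integral>\<^sup>+\<omega>. cc N \<omega> * \<Psi>' (Wn N \<omega>) \<partial>M)"
      using EXT1[OF N \<Phi>m] unfolding key \<Psi>'_def .
    have B: "(\<integral>\<^sup>+\<omega>. E N \<omega> * \<Psi>' (Wn N \<omega>) \<partial>M) = (\<integral>\<^sup>+\<omega>. cc N \<omega> * \<Psi>' (Wn N \<omega>) \<partial>M)"
      using stepI[OF N PsiW_Fn[OF \<Psi>'m, of N]] by (simp add: mult.commute)
    have C: "(\<integral>\<^sup>+\<omega>. E N \<omega> * \<Psi>' (Wn N \<omega>) \<partial>M) = (\<integral>\<^sup>+\<omega>. Sn N \<omega> * \<Psi>' (Wn N \<omega>) \<partial>M)"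
      using Suc(2) \<Psi>'m by blast
    have D: "(\<integral>\<^sup>+\<omega>. Sn N \<omega> * \<Psi> (Wn (Suc N) \<omega>) \<partial>M) = (\<integral>\<^sup>+\<omega>. Sn N \<omega> * \<Psi>' (Wn N \<omega>) \<partial>M)"
    proof -
      have "(\<integral>\<^sup>+\<omega>. Sn N \<omega> * \<Psi> (Wn (Suc N) \<omega>) \<partial>M) = (\<integral>\<^sup>+\<omega>. 1 * \<Phi>2 (Wn N \<omega>, X N \<omega>) \<partial>M)"
        unfolding \<Phi>2_def by (simp add: key Sn_eq[of N N])
      also have "\<dots> = (\<integral>\<^sup>+\<omega>. 1 * (\<integral>\<^sup>+ y. \<Phi>2 (Wn N \<omega>, y) \<partial>Uf N (Wn N \<omega>)) \<partial>M)"
        by (rule EXT2[OF N \<Phi>2m])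
      also have "\<dots> = (\<integral>\<^sup>+\<omega>. Sn N \<omega> * \<Psi>' (Wn N \<omega>) \<partial>M)"
      proof (intro nn_integral_cong)
        fix \<omega> assume "\<omega> \<in> space M"
        have "(\<lambda>y. \<Phi> (Wn N \<omega>, y)) \<in> borel_measurable (Uf N (Wn N \<omega>))"
          using measurable_compose_Pair1[OF _ \<Phi>m, of "Wn N \<omega>"] K_sets[of N "Wn N \<omega>"]
          by (simp add: HS_def space_PiM cong: measurable_cong_sets)
        then have "(\<integral>\<^sup>+ y. \<Phi>2 (Wn N \<omega>, y) \<partial>Uf N (Wn N \<omega>)) = sfun xs N (Wn N \<omega>) * \<Psi>' (Wn N \<omega>)"
          unfolding \<Phi>2_def \<Psi>'_def by (simp add: nn_integral_cmult)
        then show "1 * (\<integral>\<^sup>+ y. \<Phi>2 (Wn N \<omega>, y) \<partial>Uf N (Wn N \<omega>)) = Sn N \<omega> * \<Psi>' (Wn N \<omega>)"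
          by (simp add: Sn_eq[of N N])
      qed
      finally show ?thesis .
    qed
    have EN: "(\<integral>\<^sup>+\<omega>. E N \<omega> * \<Psi> (Wn (Suc N) \<omega>) \<partial>M) = (\<integral>\<^sup>+\<omega>. Sn N \<omega> * \<Psi> (Wn (Suc N) \<omega>) \<partial>M)"
      using A B C D by simp
    have NS: "1 \<le> Suc N" by simp
    have EN_m[measurable]: "E N \<in> borel_measurable M" using E_meas[OF N] .
    have PW[measurable]: "(\<lambda>\<omega>. \<Psi> (Wn (Suc N) \<omega>)) \<in> borel_measurable M" using PsiW_M[OF \<Psi>] .
    have "(\<integral>\<^sup>+\<omega>. E (Suc N) \<omega> * \<Psi> (Wn (Suc N) \<omega>) \<partial>M) = (\<integral>\<^sup>+\<omega>. \<Psi> (Wn (Suc N) \<omega>) * E (Suc N) \<omega> \<partial>M)"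
      by (simp add: mult.commute)
    also have "\<dots> = (\<integral>\<^sup>+\<omega>. \<Psi> (Wn (Suc N) \<omega>) * cc (Suc N) \<omega> \<partial>M)"
      by (rule stepI[OF NS PsiW_Fn[OF \<Psi>]])
    also have "\<dots> = (\<integral>\<^sup>+\<omega>. E N \<omega> * \<Psi> (Wn (Suc N) \<omega>) + ennreal (1 / lam (Suc N) \<omega>) * \<Psi> (Wn (Suc N) \<omega>) \<partial>M)"
      by (simp add: cc_Suc[OF N] distrib_left mult.commute add.commute)
    also have "\<dots> = (\<integral>\<^sup>+\<omega>. E N \<omega> * \<Psi> (Wn (Suc N) \<omega>) \<partial>M) + (\<integral>\<^sup>+\<omega>. ennreal (1 / lam (Suc N) \<omega>) * \<Psi> (Wn (Suc N) \<omega>) \<partial>M)"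
      by (intro nn_integral_add) measurable
    also have "\<dots> = (\<integral>\<^sup>+\<omega>. Sn N \<omega> * \<Psi> (Wn (Suc N) \<omega>) \<partial>M) + (\<integral>\<^sup>+\<omega>. ennreal (1 / lam (Suc N) \<omega>) * \<Psi> (Wn (Suc N) \<omega>) \<partial>M)"
      by (simp only: EN)
    also have "\<dots> = (\<integral>\<^sup>+\<omega>. Sn N \<omega> * \<Psi> (Wn (Suc N) \<omega>) + ennreal (1 / lam (Suc N) \<omega>) * \<Psi> (Wn (Suc N) \<omega>) \<partial>M)"
      by (intro nn_integral_add[symmetric]) measurable
    also have "\<dots> = (\<integral>\<^sup>+\<omega>. Sn (Suc N) \<omega> * \<Psi> (Wn (Suc N) \<omega>) \<partial>M)"
      by (simp add: Sn_Suc distrib_right)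
    finally show "(\<integral>\<^sup>+\<omega>. E (Suc N) \<omega> * \<Psi> (Wn (Suc N) \<omega>) \<partial>M) = (\<integral>\<^sup>+\<omega>. Sn (Suc N) \<omega> * \<Psi> (Wn (Suc N) \<omega>) \<partial>M)" .
  qed
qed

end

context ASL begin

lemma AS_lo_W: "n \<le> N \<Longrightarrow> AS_lo X xs n \<omega> = lof xs n (Wn N \<omega>)"
  unfolding AS_lo_eq Wn_def Hist_def by (simp add: lof_trn)

lemma AS_hi_W: "n \<le> N \<Longrightarrow> AS_hi X xs n \<omega> = hif xs n (Wn N \<omega>)"
  unfolding AS_hi_eq Wn_def Hist_def by (simp add: hif_trn)

lemma final:
  assumes N: "1 \<le> N"
  shows "AE \<omega> in M.
           nn_cond_exp M (gen_sigma M (\<Union>n\<in>{1..N}. {AS_lo X xs n, AS_hi X xs n}))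
              (\<lambda>\<omega>'. ennreal (exp (- G N \<omega>'))) \<omega>
           = ennreal (\<Sum>n=1..N. 1 / measure P_unif (AS_B X xs n \<omega>))"
proof -
  define fs where "fs = (\<Union>n\<in>{1..N}. {AS_lo X xs n, AS_hi X xs n})"
  define F where "F = gen_sigma M fs"
  have lo_m: "AS_lo X xs n \<in> borel_measurable M" if "n \<le> N" for n
  proof -
    have "(\<lambda>\<omega>. lof xs n (Wn N \<omega>)) \<in> borel_measurable M" using measurable_compose[OF Wn_measM lof_meas] .
    then show ?thesis using AS_lo_W[OF that] by (simp add: fun_eq_iff[symmetric] AS_lo_W[OF that, abs_def])
  qed
  have hi_m: "AS_hi X xs n \<in> borel_measurable M" if "n \<le> N" for n
  proof -
    have "(\<lambda>\<omega>. hif xs n (Wn N \<omega>)) \<in> borel_measurable M" using measurable_compose[OF Wn_measM hif_meas] .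
    then show ?thesis by (simp add: AS_hi_W[OF that, abs_def])
  qed
  have fsM: "f \<in> borel_measurable M" if "f \<in> fs" for f
    using that lo_m hi_m unfolding fs_def by auto
  interpret sigma_finite_subalgebra M F unfolding F_def by (rule gen_sigma_sf[OF pM fsM])
  have spF: "space F = space M" unfolding F_def by simp
  have loF: "AS_lo X xs n \<in> borel_measurable F" if "1 \<le> n" "n \<le> N" for n
    unfolding F_def by (rule gen_sigma_meas) (use that in \<open>auto simp: fs_def\<close>)
  have hiF: "AS_hi X xs n \<in> borel_measurable F" if "1 \<le> n" "n \<le> N" for n
    unfolding F_def by (rule gen_sigma_meas) (use that in \<open>auto simp: fs_def\<close>)
  have lam_lohi: "lam n \<omega> = AS_hi X xs n \<omega> - AS_lo X xs n \<omega>" for n \<omega>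
    unfolding lam_eq by (simp add: AS_lo_W[of n n] AS_hi_W[of n n])
  have SnF: "Sn N \<in> borel_measurable F"
  proof -
    have "(\<lambda>\<omega>. \<Sum>n=1..N. 1 / (AS_hi X xs n \<omega> - AS_lo X xs n \<omega>)) \<in> borel_measurable F"
    proof (rule borel_measurable_sum)
      fix n assume "n \<in> {1..N}"
      then have [measurable]: "AS_lo X xs n \<in> borel_measurable F" "AS_hi X xs n \<in> borel_measurable F"
        using loF hiF by auto
      show "(\<lambda>\<omega>. 1 / (AS_hi X xs n \<omega> - AS_lo X xs n \<omega>)) \<in> borel_measurable F" by measurable
    qed
    then show ?thesis unfolding Sn_def lam_lohi by measurable
  qed
  have vim: "sets F \<subseteq> sets (vimage_algebra (space M) (Wn N) HS)"
  proof -
    have WS: "Wn N \<in> space M \<rightarrow> space HS" by (rule Pi_I, rule measurable_space[OF Wn_measM])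
    have gen: "(\<Union>f\<in>fs. {f -` A \<inter> space M | A. A \<in> sets borel}) \<subseteq> sets (vimage_algebra (space M) (Wn N) HS)"
    proof
      fix C assume "C \<in> (\<Union>f\<in>fs. {f -` A \<inter> space M | A. A \<in> sets borel})"
      then obtain f A where f: "f \<in> fs" and A: "A \<in> sets borel" and C: "C = f -` A \<inter> space M" by auto
      from f obtain n where n: "1 \<le> n" "n \<le> N" and fn: "f = AS_lo X xs n \<or> f = AS_hi X xs n"
        unfolding fs_def by auto
      obtain g where g: "g = lof xs n \<or> g = hif xs n" and fg: "f = (\<lambda>\<omega>. g (Wn N \<omega>))"
        using fn
      proof (elim disjE)
        assume "f = AS_lo X xs n"
        then show thesis using that[of "lof xs n"] AS_lo_W[OF n(2)] by (auto simp: fun_eq_iff)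
      next
        assume "f = AS_hi X xs n"
        then show thesis using that[of "hif xs n"] AS_hi_W[OF n(2)] by (auto simp: fun_eq_iff)
      qed
      have gm: "g \<in> borel_measurable HS" using g by auto
      have "C = Wn N -` (g -` A \<inter> space HS) \<inter> space M" unfolding C fg using WS by auto
      moreover have "g -` A \<inter> space HS \<in> sets HS" using measurable_sets[OF gm A] .
      ultimately show "C \<in> sets (vimage_algebra (space M) (Wn N) HS)"
        unfolding sets_vimage_algebra2[OF WS] by blast
    qed
    show ?thesis unfolding F_def gen_sigma_sets
      using sets.sigma_sets_subset[OF gen] by simp
  qed
  have charact: "AE \<omega> in M. Sn N \<omega> = nn_cond_exp M F (E N) \<omega>"
  proof (rule nn_cond_exp_charact[OF _ E_meas[OF N] SnF])
    fix A assume A: "A \<in> sets F"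
    have WS: "Wn N \<in> space M \<rightarrow> space HS" by (rule Pi_I, rule measurable_space[OF Wn_measM])
    obtain S' where S': "S' \<in> sets HS" and AS': "A = Wn N -` S' \<inter> space M"
      using vim A unfolding sets_vimage_algebra2[OF WS] by auto
    have ind: "indicator A \<omega> = (indicator S' (Wn N \<omega>) :: ennreal)" if "\<omega> \<in> space M" for \<omega>
      using that unfolding AS' by (auto simp: indicator_def)
    have "(\<integral>\<^sup>+ x \<in> A. E N x \<partial>M) = (\<integral>\<^sup>+ x. E N x * indicator S' (Wn N x) \<partial>M)"
      by (intro nn_integral_cong) (simp add: ind)
    also have "\<dots> = (\<integral>\<^sup>+ x. Sn N x * indicator S' (Wn N x) \<partial>M)"
      using mainC[OF N] S' by auto
    also have "\<dots> = (\<integral>\<^sup>+ x \<in> A. Sn N x \<partial>M)"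
      by (intro nn_integral_cong) (simp add: ind)
    finally show "(\<integral>\<^sup>+ x \<in> A. E N x \<partial>M) = (\<integral>\<^sup>+ x \<in> A. Sn N x \<partial>M)" .
  qed
  have EE: "E N = (\<lambda>\<omega>'. ennreal (exp (- G N \<omega>')))" by (auto simp: E_def)
  show ?thesis using charact
  proof (eventually_elim)
    case (elim \<omega>)
    then have "nn_cond_exp M F (E N) \<omega> = Sn N \<omega>" by (rule sym)
    then show ?case unfolding F_def fs_def EE Sn_def lam_def .
  qed
qed

end

theorem mainTheorem7:
  fixes M :: "'a measure" and r :: "real \<Rightarrow> real" and xstar rmax :: real
    and G X :: "nat \<Rightarrow> 'a \<Rightarrow> real" and N :: nat
  assumes "prob_space M"
    and "r \<in> borel_measurable borel"
    and "\<forall>x\<in>{0..1}. 0 \<le> r x"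
    and "prob_space (density P_unif r)"
    and "xstar \<in> {0..1}"
    and "\<forall>x y. 0 \<le> x \<and> x \<le> y \<and> y \<le> xstar \<longrightarrow> r x \<le> r y"
    and "\<forall>x y. xstar \<le> x \<and> x \<le> y \<and> y \<le> 1 \<longrightarrow> r y \<le> r x"
    and "bdd_above (r ` {0..1})"
    and "rmax = Sup (r ` {0..1})"
    and "r xstar = rmax"
    and "is_AS_star M xstar G X"
    and "N \<ge> 1"
  shows "AE \<omega> in M.
           nn_cond_exp M (gen_sigma M (\<Union>n\<in>{1..N}. {AS_lo X xstar n, AS_hi X xstar n}))
              (\<lambda>\<omega>'. ennreal (exp (- G N \<omega>'))) \<omega>
           = ennreal (\<Sum>n=1..N. 1 / measure P_unif (AS_B X xstar n \<omega>))"
proof -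
  have x0: "0 \<le> xstar" and x1: "xstar \<le> 1" using assms(5) by auto
  have I: "ASL M xstar G X" by (rule ASL.intro[OF assms(1) x0 x1 assms(11)])
  show ?thesis by (rule ASL.final[OF I assms(12)])
qed

end
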